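(* Let $\mathcal C$ be a category, $n\ge0$, $0\le i\le n$, and let $f:A\to B$ be a zigzag map in $Z(\mathcal C)$ from a zigzag $A$ of length $n$ to a zigzag $B$ of length $n+1$ whose singular map is the face map $d_i:[n]\to[n+1]$ (so its regular slices are $f(r_j):A(r_j)\to B(r_j)$ for $j\le i$ and $f(r_j):A(r_{j-1})\to B(r_j)$ for $j\ge i+1$, and its singular slices are $f(s_j):A(s_j)\to B(s_{d_i(j)})$). Then $f$ is $\pi$-cartesian if and only if all singular slices $f(s_j)$ are isomorphisms in $\mathcal C$, all regular slices $f(r_j)$ with $j\notin\{i,i+1\}$ are isomorphisms in $\mathcal C$, and the commutative square formed by $f(r_i):A(r_i)\to B(r_i)$, $f(r_{i+1}):A(r_i)\to B(r_{i+1})$ and the cospan legs $b_i:B(r_i)\to B(s_i)$, $b'_i:B(r_{i+1})\to B(s_i)$ is a pullback square in $\mathcal C$.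
   Context: Notation: for $n\ge 0$, $[n]$ denotes $\{0,\dots,n-1\}$; $\Delta_+$ is the category of these finite total orders and order-preserving maps. The $i$-th face map $d_i:[n]\to[n+1]$ is the unique injective order-preserving map omitting $i$ from its image. For monotone $\varphi:[n]\to[m]$ define $\hat\varphi:[m+1]\to[n+1]$ by $\hat\varphi(i)=\min(\{j\in[n]:\varphi(j)\ge i\}\cup\{n\})$. Zigzags: in a category $\mathcal C$, a zigzag $X$ of length $n$ is a diagram $X(r_0)\xrightarrow{x_0} X(s_0)\xleftarrow{x'_0} X(r_1)\to\cdots\xrightarrow{x_{n-1}} X(s_{n-1})\xleftarrow{x'_{n-1}} X(r_n)$. A zigzag map $f:X\to Y$ (lengths $n$, $m$) consists of a monotone $f_s:[n]\to[m]$ (singular map), regular slices $f(r_i):X(r_{\hat{f_s}(i)})\to Y(r_i)$ for $0\le i\le m$ and singular slices $f(s_j):X(s_j)\to Y(s_{f_s(j)})$ for $0\le j<n$, such that for each $0\le i<m$: if $f_s^{-1}(i)\neq\emptyset$ with least element $p$, greatest $q$, then $f(s_p)\circ x_p=y_i\circ f(r_i)$, $f(s_q)\circ x'_q=y'_i\circ f(r_{i+1})$, $f(s_j)\circ x'_j=f(s_{j+1})\circ x_{j+1}$ for $p\le j<q$; if $f_s^{-1}(i)=\emptyset$ then $y_i\circ f(r_i)=y'_i\circ f(r_{i+1})$. Composition: $(g\circ f)_s=g_s\circ f_s$, $(g\circ f)(s_j)=g(s_{f_s(j)})\circ f(s_j)$, $(g\circ f)(r_i)=g(r_i)\circ f(r_{\hat{g_s}(i)})$.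 This gives the category $Z(\mathcal C)$. The functor $\pi:Z(\mathcal C)\to\Delta_+$ sends a zigzag of length $n$ to $[n]$ and $f$ to $f_s$. A map $f:x\to y$ is $\pi$-cartesian if for every map $h:x'\to y$ and every $u:\pi(x')\to\pi(x)$ with $\pi(f)\circ u=\pi(h)$ there is a unique $v:x'\to x$ with $f\circ v=h$ and $\pi(v)=u$. *)

theory Defs
  imports Main
begin

record ('o, 'm) category =
  Ob    :: "'o set"
  Ar    :: "'m set"
  cdom  :: "'m \<Rightarrow> 'o"
  ccod  :: "'m \<Rightarrow> 'o"
  ccomp :: "'m \<Rightarrow> 'm \<Rightarrow> 'm"   (* ccomp C g f = g o f *)
  cid   :: "'o \<Rightarrow> 'm"

definition hom :: "('o,'m) category \<Rightarrow> 'm \<Rightarrow> 'o \<Rightarrow> 'o \<Rightarrow> bool" where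
  "hom C f a b \<longleftrightarrow> f \<in> Ar C \<and> cdom C f = a \<and> ccod C f = b"

definition category :: "('o,'m) category \<Rightarrow> bool" where
  "category C \<longleftrightarrow>
     (\<forall>f\<in>Ar C. cdom C f \<in> Ob C \<and> ccod C f \<in> Ob C) \<and>
     (\<forall>a\<in>Ob C. hom C (cid C a) a a) \<and>
     (\<forall>f\<in>Ar C. \<forall>g\<in>Ar C. ccod C f = cdom C g \<longrightarrow>
        hom C (ccomp C g f) (cdom C f) (ccod C g)) \<and>
     (\<forall>f\<in>Ar C. \<forall>g\<in>Ar C. \<forall>h\<in>Ar C. ccod C f = cdom C g \<longrightarrow> ccod C g = cdom C h \<longrightarrow>
        ccomp C h (ccomp C g f) = ccomp C (ccomp C h g) f) \<and>
     (\<forall>f\<in>Ar C. ccomp C f (cid C (cdom C f)) = f \<and> ccomp C (cid C (ccod C f)) f = f)"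

definition iso :: "('o,'m) category \<Rightarrow> 'm \<Rightarrow> bool" where
  "iso C f \<longleftrightarrow> f \<in> Ar C \<and> (\<exists>g. hom C g (ccod C f) (cdom C f) \<and>
      ccomp C g f = cid C (cdom C f) \<and> ccomp C f g = cid C (ccod C f))"

definition is_pullback :: "('o,'m) category \<Rightarrow> 'm \<Rightarrow> 'm \<Rightarrow> 'm \<Rightarrow> 'm \<Rightarrow> bool" where
  "is_pullback C p1 p2 g1 g2 \<longleftrightarrow>
     p1 \<in> Ar C \<and> p2 \<in> Ar C \<and> g1 \<in> Ar C \<and> g2 \<in> Ar C \<and>
     cdom C p1 = cdom C p2 \<and> ccod C p1 = cdom C g1 \<and> ccod C p2 = cdom C g2 \<and>
     ccod C g1 = ccod C g2 \<and>
     ccomp C g1 p1 = ccomp C g2 p2 \<and>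
     (\<forall>q1 q2. q1 \<in> Ar C \<and> q2 \<in> Ar C \<and> cdom C q1 = cdom C q2 \<and>
        ccod C q1 = cdom C g1 \<and> ccod C q2 = cdom C g2 \<and> ccomp C g1 q1 = ccomp C g2 q2 \<longrightarrow>
        (\<exists>!u. hom C u (cdom C q1) (cdom C p1) \<and> ccomp C p1 u = q1 \<and> ccomp C p2 u = q2))"

text \<open>A zigzag of length n: regular objects reg 0..n, singular objects sing 0..n-1,
  forward legs fwd j : reg j \<rightarrow> sing j, backward legs bwd j : reg (j+1) \<rightarrow> sing j.\<close>
record ('o, 'm) zigzag =
  zlen :: nat
  reg  :: "nat \<Rightarrow> 'o"
  sing :: "nat \<Rightarrow> 'o"
  fwd  :: "nat \<Rightarrow> 'm"
  bwd  :: "nat \<Rightarrow> 'm"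

definition zigzag :: "('o,'m) category \<Rightarrow> ('o,'m) zigzag \<Rightarrow> bool" where
  "zigzag C X \<longleftrightarrow>
     (\<forall>i\<le>zlen X. reg X i \<in> Ob C) \<and> (\<forall>j<zlen X. sing X j \<in> Ob C) \<and>
     (\<forall>j<zlen X. hom C (fwd X j) (reg X j) (sing X j) \<and> hom C (bwd X j) (reg X (Suc j)) (sing X j))"

definition hat :: "nat \<Rightarrow> (nat \<Rightarrow> nat) \<Rightarrow> nat \<Rightarrow> nat" where
  "hat n \<phi> i = (if \<exists>j<n. i \<le> \<phi> j then (LEAST j. j < n \<and> i \<le> \<phi> j) else n)"

text \<open>A morphism of Z(C), carrying its source and target zigzags. Components outside
  their index ranges are fixed (0 / undefined) so that equality of maps is equality of data.\<close>
record ('o, 'm) zmap =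
  zsrc :: "('o,'m) zigzag"
  ztgt :: "('o,'m) zigzag"
  smap :: "nat \<Rightarrow> nat"
  rsl  :: "nat \<Rightarrow> 'm"
  ssl  :: "nat \<Rightarrow> 'm"

definition monotone_map :: "nat \<Rightarrow> nat \<Rightarrow> (nat \<Rightarrow> nat) \<Rightarrow> bool" where
  "monotone_map n m \<phi> \<longleftrightarrow> (\<forall>j<n. \<phi> j < m) \<and> (\<forall>j k. j \<le> k \<and> k < n \<longrightarrow> \<phi> j \<le> \<phi> k)"

definition is_zmap :: "('o,'m) category \<Rightarrow> ('o,'m) zmap \<Rightarrow> bool" where
  "is_zmap C f \<longleftrightarrow>
    (let X = zsrc f; Y = ztgt f; n = zlen X; m = zlen Y; \<phi> = smap f in
     zigzag C X \<and> zigzag C Y \<and> monotone_map n m \<phi> \<and>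
     (\<forall>j\<ge>n. \<phi> j = 0) \<and> (\<forall>i>m. rsl f i = undefined) \<and> (\<forall>j\<ge>n. ssl f j = undefined) \<and>
     (\<forall>i\<le>m. hom C (rsl f i) (reg X (hat n \<phi> i)) (reg Y i)) \<and>
     (\<forall>j<n. hom C (ssl f j) (sing X j) (sing Y (\<phi> j))) \<and>
     (\<forall>i<m. let P = {j. j < n \<and> \<phi> j = i} in
        (P \<noteq> {} \<longrightarrow>
           ccomp C (ssl f (Min P)) (fwd X (Min P)) = ccomp C (fwd Y i) (rsl f i) \<and>
           ccomp C (ssl f (Max P)) (bwd X (Max P)) = ccomp C (bwd Y i) (rsl f (Suc i)) \<and>
           (\<forall>j. Min P \<le> j \<and> j < Max P \<longrightarrow>
              ccomp C (ssl f j) (bwd X j) = ccomp C (ssl f (Suc j)) (fwd X (Suc j)))) \<and>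
        (P = {} \<longrightarrow> ccomp C (fwd Y i) (rsl f i) = ccomp C (bwd Y i) (rsl f (Suc i)))))"

definition zcomp :: "('o,'m) category \<Rightarrow> ('o,'m) zmap \<Rightarrow> ('o,'m) zmap \<Rightarrow> ('o,'m) zmap" where
  "zcomp C g f =
    \<lparr> zsrc = zsrc f, ztgt = ztgt g,
      smap = (\<lambda>j. if j < zlen (zsrc f) then smap g (smap f j) else 0),
      rsl = (\<lambda>i. if i \<le> zlen (ztgt g)
                 then ccomp C (rsl g i) (rsl f (hat (zlen (zsrc g)) (smap g) i)) else undefined),
      ssl = (\<lambda>j. if j < zlen (zsrc f) then ccomp C (ssl g (smap f j)) (ssl f j) else undefined) \<rparr>"

definition pi_cartesian :: "('o,'m) category \<Rightarrow> ('o,'m) zmap \<Rightarrow> bool" where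
  "pi_cartesian C f \<longleftrightarrow>
    (\<forall>h u. is_zmap C h \<and> ztgt h = ztgt f \<and>
        monotone_map (zlen (zsrc h)) (zlen (zsrc f)) u \<and>
        (\<forall>j<zlen (zsrc h). smap f (u j) = smap h j) \<longrightarrow>
       (\<exists>!v. is_zmap C v \<and> zsrc v = zsrc h \<and> ztgt v = zsrc f \<and>
             (\<forall>j<zlen (zsrc h). smap v j = u j) \<and> zcomp C f v = h))"

definition face :: "nat \<Rightarrow> nat \<Rightarrow> nat" where
  "face i j = (if j < i then j else Suc j)"

end

theory Submission
  imports Defs
begin


locale cat =
  fixes C :: "('o,'m) category"
  assumes cat: "category C"
begin

abbreviation cmp (infixr "\<cdot>" 55) where "g \<cdot> f \<equiv> ccomp C g f"

lemma hom_comp: "hom C f a b \<Longrightarrow> hom C g b c \<Longrightarrow> hom C (g \<cdot> f) a c"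
  using cat unfolding category_def hom_def by metis

lemma comp_assoc: "hom C f a b \<Longrightarrow> hom C g b c \<Longrightarrow> hom C h c d \<Longrightarrow> (h \<cdot> g) \<cdot> f = h \<cdot> (g \<cdot> f)"
  using cat unfolding category_def hom_def by metis

lemma hom_obs: "hom C f a b \<Longrightarrow> a \<in> Ob C \<and> b \<in> Ob C"
  using cat unfolding category_def hom_def by metis

lemma id_hom: "a \<in> Ob C \<Longrightarrow> hom C (cid C a) a a"
  using cat unfolding category_def by metis

lemma id_hom': "hom C f a b \<Longrightarrow> hom C (cid C a) a a"
  "hom C f a b \<Longrightarrow> hom C (cid C b) b b"
  using id_hom hom_obs by blast+

lemma comp_id_l: "hom C f a b \<Longrightarrow> cid C b \<cdot> f = f"
  using cat unfolding category_def hom_def by metis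

lemma comp_id_r: "hom C f a b \<Longrightarrow> f \<cdot> cid C a = f"
  using cat unfolding category_def hom_def by metis

definition cinv :: "'m \<Rightarrow> 'm" where
  "cinv f = (SOME g. hom C g (ccod C f) (cdom C f) \<and>
      g \<cdot> f = cid C (cdom C f) \<and> f \<cdot> g = cid C (ccod C f))"

lemma iso_inv:
  assumes "iso C f" "hom C f a b"
  shows "hom C (cinv f) b a" "cinv f \<cdot> f = cid C a" "f \<cdot> cinv f = cid C b"
proof -
  have "\<exists>g. hom C g (ccod C f) (cdom C f) \<and> g \<cdot> f = cid C (cdom C f) \<and> f \<cdot> g = cid C (ccod C f)"
    using assms(1) unfolding iso_def by blast
  then have "hom C (cinv f) (ccod C f) (cdom C f) \<and>
      cinv f \<cdot> f = cid C (cdom C f) \<and> f \<cdot> cinv f = cid C (ccod C f)"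
    unfolding cinv_def by (rule someI_ex)
  then show "hom C (cinv f) b a" "cinv f \<cdot> f = cid C a" "f \<cdot> cinv f = cid C b"
    using assms(2) unfolding hom_def by auto
qed

lemma isoI: "hom C f a b \<Longrightarrow> hom C g b a \<Longrightarrow> g \<cdot> f = cid C a \<Longrightarrow> f \<cdot> g = cid C b \<Longrightarrow> iso C f"
  unfolding iso_def hom_def by auto

lemma iso_cancel:
  assumes "iso C f" "hom C f a b" "hom C x c a" "hom C y c a" "f \<cdot> x = f \<cdot> y"
  shows "x = y"
proof -
  have "x = (cinv f \<cdot> f) \<cdot> x" using iso_inv[OF assms(1,2)] comp_id_l[OF assms(3)] by simp
  also have "\<dots> = cinv f \<cdot> (f \<cdot> y)" using comp_assoc[OF assms(3,2) iso_inv(1)[OF assms(1,2)]] assms(5) by simp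
  also have "\<dots> = (cinv f \<cdot> f) \<cdot> y" using comp_assoc[OF assms(4,2) iso_inv(1)[OF assms(1,2)]] by simp
  also have "\<dots> = y" using iso_inv[OF assms(1,2)] comp_id_l[OF assms(4)] by simp
  finally show ?thesis .
qed

lemma iso_solve:
  assumes "iso C f" "hom C f a b" "hom C x c a" "f \<cdot> x = y"
  shows "x = cinv f \<cdot> y"
proof -
  have "x = (cinv f \<cdot> f) \<cdot> x" using iso_inv[OF assms(1,2)] comp_id_l[OF assms(3)] by simp
  also have "\<dots> = cinv f \<cdot> y" using comp_assoc[OF assms(3,2) iso_inv(1)[OF assms(1,2)]] assms(4) by simp
  finally show ?thesis .
qed

lemma iso_cancel_inv:
  assumes "iso C f" "hom C f a b" "hom C y c b"
  shows "f \<cdot> (cinv f \<cdot> y) = y"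
proof -
  have "f \<cdot> (cinv f \<cdot> y) = (f \<cdot> cinv f) \<cdot> y"
    using comp_assoc[OF assms(3) iso_inv(1)[OF assms(1,2)] assms(2)] by simp
  then show ?thesis using iso_inv[OF assms(1,2)] comp_id_l[OF assms(3)] by simp
qed

end

definition cf :: "nat \<Rightarrow> nat \<Rightarrow> nat" where
  "cf i k = (if k \<le> i then k else k - 1)"

lemma hat_cong:
  assumes "\<And>j. j < m \<Longrightarrow> (k \<le> \<phi> j) = (k' \<le> \<psi> j)"
  shows "hat m \<phi> k = hat m \<psi> k'"
  unfolding hat_def using assms by (auto intro!: arg_cong[where f=Least])

lemma hat_id: "k \<le> n \<Longrightarrow> hat n (\<lambda>j. j) k = k"
  unfolding hat_def
proof (cases "k < n")
  case True
  then show "(if \<exists>j<n. k \<le> j then LEAST j. j < n \<and> k \<le> j else n) = k"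
    by (auto intro!: Least_equality)
qed auto

lemma face_le: "(k \<le> face i x) = (cf i k \<le> x)"
  unfolding face_def cf_def by auto

lemma hat_face_gen:
  assumes "\<And>j. j < m \<Longrightarrow> \<phi> j = face i (u j)"
  shows "hat m \<phi> k = hat m u (cf i k)"
  by (rule hat_cong) (simp add: assms face_le)

lemma hat_face:
  assumes "\<And>j. j < n \<Longrightarrow> \<phi> j = face i j" "k \<le> Suc n" "i \<le> n"
  shows "hat n \<phi> k = cf i k"
proof -
  have "hat n \<phi> k = hat n (\<lambda>j. j) (cf i k)" by (rule hat_face_gen) (simp add: assms)
  also have "\<dots> = cf i k" using assms(2,3) by (intro hat_id) (auto simp: cf_def)
  finally show ?thesis .
qed

lemma hat_idmap:
  assumes "\<And>j. j < n \<Longrightarrow> \<phi> j = j" "k \<le> n"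
  shows "hat n \<phi> k = k"
proof -
  have "hat n \<phi> k = hat n (\<lambda>j. j) k" by (rule hat_cong) (simp add: assms)
  then show ?thesis using hat_id assms by simp
qed

lemma cf_face: "cf i (face i j) = j"
  unfolding cf_def face_def by auto

lemma face_cf: "k \<noteq> i \<Longrightarrow> face i (cf i k) = k"
  unfolding cf_def face_def by auto

lemma face_inj: "(face i a = face i b) = (a = b)"
  unfolding face_def by auto

lemma face_ne: "face i j \<noteq> i"
  unfolding face_def by auto



lemma face_P:
  assumes "\<forall>j<n. \<phi> j = face i j" "k \<noteq> i" "k < Suc n" "i \<le> n"
  shows "{j. j<n \<and> \<phi> j = k} = {cf i k}" "cf i k < n"
proof -
  show "cf i k < n" using assms unfolding cf_def by auto
  then show "{j. j<n \<and> \<phi> j = k} = {cf i k}"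
    using assms face_cf[OF assms(2)] cf_face by auto
qed

lemma face_P0:
  assumes "\<forall>j<n. \<phi> j = face i j"
  shows "{j. j<n \<and> \<phi> j = i} = {}"
  using assms face_ne by auto

lemma monotone_face: "i \<le> n \<Longrightarrow> (\<forall>j<n. \<phi> j = face i j) \<Longrightarrow> monotone_map n (Suc n) \<phi>"
  unfolding monotone_map_def face_def by auto

lemma monotone_idm: "(\<forall>j<n. \<phi> j = j) \<Longrightarrow> monotone_map n n \<phi>"
  unfolding monotone_map_def by auto

lemma face_clause:
  fixes S F G R B H :: "nat \<Rightarrow> 'm" and cmpx (infixr "\<cdot>\<^sub>c" 55)
  assumes "\<forall>j<n. \<phi> j = face i j" "i \<le> n"
  shows "(\<forall>k<Suc n. let P = {j. j < n \<and> \<phi> j = k} in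
        (P \<noteq> {} \<longrightarrow>
           S (Min P) \<cdot>\<^sub>c F (Min P) = G k \<cdot>\<^sub>c R k \<and>
           S (Max P) \<cdot>\<^sub>c B (Max P) = H k \<cdot>\<^sub>c R (Suc k) \<and>
           (\<forall>j. Min P \<le> j \<and> j < Max P \<longrightarrow> S j \<cdot>\<^sub>c B j = S (Suc j) \<cdot>\<^sub>c F (Suc j))) \<and>
        (P = {} \<longrightarrow> G k \<cdot>\<^sub>c R k = H k \<cdot>\<^sub>c R (Suc k)))
   \<longleftrightarrow> ((\<forall>j<n. S j \<cdot>\<^sub>c F j = G (face i j) \<cdot>\<^sub>c R (face i j) \<and>
               S j \<cdot>\<^sub>c B j = H (face i j) \<cdot>\<^sub>c R (Suc (face i j))) \<and>
        G i \<cdot>\<^sub>c R i = H i \<cdot>\<^sub>c R (Suc i))"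
  (is "?L \<longleftrightarrow> ?R")
proof
  assume L: ?L
  have A: "\<forall>j<n. S j \<cdot>\<^sub>c F j = G (face i j) \<cdot>\<^sub>c R (face i j) \<and>
               S j \<cdot>\<^sub>c B j = H (face i j) \<cdot>\<^sub>c R (Suc (face i j))"
  proof (intro allI impI)
    fix j assume j: "j < n"
    let ?k = "face i j"
    have k: "?k \<noteq> i" "?k < Suc n" using j face_ne unfolding face_def by auto
    have P: "{j'. j' < n \<and> \<phi> j' = ?k} = {j}"
      using face_P[OF assms(1) k assms(2)] cf_face by simp
    show "S j \<cdot>\<^sub>c F j = G ?k \<cdot>\<^sub>c R ?k \<and> S j \<cdot>\<^sub>c B j = H ?k \<cdot>\<^sub>c R (Suc ?k)"
      using L[rule_format, OF k(2)] unfolding Let_def P by simp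
  qed
  have "G i \<cdot>\<^sub>c R i = H i \<cdot>\<^sub>c R (Suc i)"
    using L[rule_format, of i] face_P0[OF assms(1)] assms(2) unfolding Let_def by simp
  with A show ?R by blast
next
  assume R: ?R
  show ?L
  proof (intro allI impI)
    fix k assume k: "k < Suc n"
    show "let P = {j. j < n \<and> \<phi> j = k} in
        (P \<noteq> {} \<longrightarrow>
           S (Min P) \<cdot>\<^sub>c F (Min P) = G k \<cdot>\<^sub>c R k \<and>
           S (Max P) \<cdot>\<^sub>c B (Max P) = H k \<cdot>\<^sub>c R (Suc k) \<and>
           (\<forall>j. Min P \<le> j \<and> j < Max P \<longrightarrow> S j \<cdot>\<^sub>c B j = S (Suc j) \<cdot>\<^sub>c F (Suc j))) \<and>
        (P = {} \<longrightarrow> G k \<cdot>\<^sub>c R k = H k \<cdot>\<^sub>c R (Suc k))"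
    proof (cases "k = i")
      case True
      then show ?thesis using R face_P0[OF assms(1)] unfolding Let_def by simp
    next
      case False
      have P: "{j. j < n \<and> \<phi> j = k} = {cf i k}" "cf i k < n"
        using face_P[OF assms(1) False k assms(2)] by auto
      show ?thesis unfolding Let_def P(1) using R P(2) face_cf[OF False] by force
    qed
  qed
qed

lemma id_clause:
  fixes S F G R B H :: "nat \<Rightarrow> 'm" and cmpx (infixr "\<cdot>\<^sub>c" 55)
  assumes "\<forall>j<n. \<phi> j = j"
  shows "(\<forall>k<n. let P = {j. j < n \<and> \<phi> j = k} in
        (P \<noteq> {} \<longrightarrow>
           S (Min P) \<cdot>\<^sub>c F (Min P) = G k \<cdot>\<^sub>c R k \<and>
           S (Max P) \<cdot>\<^sub>c B (Max P) = H k \<cdot>\<^sub>c R (Suc k) \<and>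
           (\<forall>j. Min P \<le> j \<and> j < Max P \<longrightarrow> S j \<cdot>\<^sub>c B j = S (Suc j) \<cdot>\<^sub>c F (Suc j))) \<and>
        (P = {} \<longrightarrow> G k \<cdot>\<^sub>c R k = H k \<cdot>\<^sub>c R (Suc k)))
   \<longleftrightarrow> (\<forall>j<n. S j \<cdot>\<^sub>c F j = G j \<cdot>\<^sub>c R j \<and> S j \<cdot>\<^sub>c B j = H j \<cdot>\<^sub>c R (Suc j))"
proof -
  have P: "k < n \<Longrightarrow> {j. j < n \<and> \<phi> j = k} = {k}" for k using assms by auto
  show ?thesis
    by (rule all_cong) (auto simp: P Let_def)
qed

lemma is_zmap_face:
  assumes "zlen (zsrc g) = n" "zlen (ztgt g) = Suc n" "i \<le> n" "\<forall>j<n. smap g j = face i j"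
  shows "is_zmap C g \<longleftrightarrow> (zigzag C (zsrc g) \<and> zigzag C (ztgt g) \<and> (\<forall>j\<ge>n. smap g j = 0) \<and>
     (\<forall>k>Suc n. rsl g k = undefined) \<and> (\<forall>j\<ge>n. ssl g j = undefined) \<and>
     (\<forall>k\<le>Suc n. hom C (rsl g k) (reg (zsrc g) (cf i k)) (reg (ztgt g) k)) \<and>
     (\<forall>j<n. hom C (ssl g j) (sing (zsrc g) j) (sing (ztgt g) (face i j))) \<and>
     (\<forall>j<n. ccomp C (ssl g j) (fwd (zsrc g) j) = ccomp C (fwd (ztgt g) (face i j)) (rsl g (face i j)) \<and>
            ccomp C (ssl g j) (bwd (zsrc g) j) = ccomp C (bwd (ztgt g) (face i j)) (rsl g (Suc (face i j)))) \<and>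
     ccomp C (fwd (ztgt g) i) (rsl g i) = ccomp C (bwd (ztgt g) i) (rsl g (Suc i)))"
proof -
  have H: "k \<le> Suc n \<Longrightarrow> hat n (smap g) k = cf i k" for k
    using hat_face[of n "smap g" i k] assms by auto
  have M: "monotone_map n (Suc n) (smap g)" using monotone_face assms by blast
  have HH: "(\<forall>k\<le>Suc n. hom C (rsl g k) (reg (zsrc g) (hat n (smap g) k)) (reg (ztgt g) k)) =
       (\<forall>k\<le>Suc n. hom C (rsl g k) (reg (zsrc g) (cf i k)) (reg (ztgt g) k))"
    using H by auto
  have HS: "(\<forall>j<n. hom C (ssl g j) (sing (zsrc g) j) (sing (ztgt g) (smap g j))) =
     (\<forall>j<n. hom C (ssl g j) (sing (zsrc g) j) (sing (ztgt g) (face i j)))"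
    using assms(4) by auto
  show ?thesis
    unfolding is_zmap_def Let_def[of "zsrc g"] Let_def[of "ztgt g"] Let_def[of "zlen _"] Let_def[of "smap g"]
    unfolding assms(1,2) HH HS
    using face_clause[OF assms(4) assms(3), where S="ssl g" and F="fwd (zsrc g)" and G="fwd (ztgt g)" and R="rsl g" and B="bwd (zsrc g)" and H="bwd (ztgt g)" and cmpx="ccomp C"]
    using M by simp
qed

lemma is_zmap_idm:
  assumes "zlen (zsrc g) = n" "zlen (ztgt g) = n" "\<forall>j<n. smap g j = j"
  shows "is_zmap C g \<longleftrightarrow> (zigzag C (zsrc g) \<and> zigzag C (ztgt g) \<and> (\<forall>j\<ge>n. smap g j = 0) \<and>
     (\<forall>k>n. rsl g k = undefined) \<and> (\<forall>j\<ge>n. ssl g j = undefined) \<and>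
     (\<forall>k\<le>n. hom C (rsl g k) (reg (zsrc g) k) (reg (ztgt g) k)) \<and>
     (\<forall>j<n. hom C (ssl g j) (sing (zsrc g) j) (sing (ztgt g) j)) \<and>
     (\<forall>j<n. ccomp C (ssl g j) (fwd (zsrc g) j) = ccomp C (fwd (ztgt g) j) (rsl g j) \<and>
            ccomp C (ssl g j) (bwd (zsrc g) j) = ccomp C (bwd (ztgt g) j) (rsl g (Suc j))))"
proof -
  have H: "k \<le> n \<Longrightarrow> hat n (smap g) k = k" for k
    using hat_idmap[of n "smap g" k] assms by auto
  have M: "monotone_map n n (smap g)" using monotone_idm assms by blast
  have HH: "(\<forall>k\<le>n. hom C (rsl g k) (reg (zsrc g) (hat n (smap g) k)) (reg (ztgt g) k)) =
       (\<forall>k\<le>n. hom C (rsl g k) (reg (zsrc g) k) (reg (ztgt g) k))"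
    using H by auto
  have HS: "(\<forall>j<n. hom C (ssl g j) (sing (zsrc g) j) (sing (ztgt g) (smap g j))) =
     (\<forall>j<n. hom C (ssl g j) (sing (zsrc g) j) (sing (ztgt g) j))"
    using assms(3) by auto
  show ?thesis
    unfolding is_zmap_def Let_def[of "zsrc g"] Let_def[of "ztgt g"] Let_def[of "zlen _"] Let_def[of "smap g"]
    unfolding assms(1,2) HH HS
    using id_clause[OF assms(3), where S="ssl g" and F="fwd (zsrc g)" and G="fwd (ztgt g)" and R="rsl g" and B="bwd (zsrc g)" and H="bwd (ztgt g)" and cmpx="ccomp C"]
    using M by simp
qed



context cat
begin

lemma assocR: "f \<in> Ar C \<Longrightarrow> g \<in> Ar C \<Longrightarrow> h \<in> Ar C \<Longrightarrow> ccod C f = cdom C g \<Longrightarrow> ccod C g = cdom C h \<Longrightarrow>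
   (h \<cdot> g) \<cdot> f = h \<cdot> (g \<cdot> f)"
  using cat unfolding category_def by metis

lemma comp_Ar: "f \<in> Ar C \<Longrightarrow> g \<in> Ar C \<Longrightarrow> ccod C f = cdom C g \<Longrightarrow> g \<cdot> f \<in> Ar C"
  using cat unfolding category_def hom_def by metis

lemma comp_dom: "f \<in> Ar C \<Longrightarrow> g \<in> Ar C \<Longrightarrow> ccod C f = cdom C g \<Longrightarrow> cdom C (g \<cdot> f) = cdom C f"
  using cat unfolding category_def hom_def by metis

lemma comp_cod: "f \<in> Ar C \<Longrightarrow> g \<in> Ar C \<Longrightarrow> ccod C f = cdom C g \<Longrightarrow> ccod C (g \<cdot> f) = ccod C g"
  using cat unfolding category_def hom_def by metis

lemmas csimps = assocR comp_Ar comp_dom comp_cod hom_def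

definition pbm :: "'m \<Rightarrow> 'm \<Rightarrow> 'm \<Rightarrow> 'm \<Rightarrow> 'm" where
  "pbm p1 p2 q1 q2 = (THE w. hom C w (cdom C q1) (cdom C p1) \<and> p1 \<cdot> w = q1 \<and> p2 \<cdot> w = q2)"

lemma pbm_props:
  assumes "is_pullback C p1 p2 g1 g2" "hom C g1 X Z" "hom C g2 Y Z"
    "hom C q1 Q X" "hom C q2 Q Y" "g1 \<cdot> q1 = g2 \<cdot> q2"
  shows "hom C (pbm p1 p2 q1 q2) Q (cdom C p1)" "p1 \<cdot> pbm p1 p2 q1 q2 = q1" "p2 \<cdot> pbm p1 p2 q1 q2 = q2"
    "\<And>w. hom C w Q (cdom C p1) \<Longrightarrow> p1 \<cdot> w = q1 \<Longrightarrow> p2 \<cdot> w = q2 \<Longrightarrow> w = pbm p1 p2 q1 q2"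
proof -
  have ex: "\<exists>!w. hom C w (cdom C q1) (cdom C p1) \<and> p1 \<cdot> w = q1 \<and> p2 \<cdot> w = q2"
  proof -
    have U: "q1 \<in> Ar C \<and> q2 \<in> Ar C \<and> cdom C q1 = cdom C q2 \<and> ccod C q1 = cdom C g1 \<and>
       ccod C q2 = cdom C g2 \<and> g1 \<cdot> q1 = g2 \<cdot> q2 \<longrightarrow>
       (\<exists>!u. hom C u (cdom C q1) (cdom C p1) \<and> p1 \<cdot> u = q1 \<and> p2 \<cdot> u = q2)"
      using assms(1) unfolding is_pullback_def by blast
    have pre: "q1 \<in> Ar C \<and> q2 \<in> Ar C \<and> cdom C q1 = cdom C q2 \<and> ccod C q1 = cdom C g1 \<and>
       ccod C q2 = cdom C g2 \<and> g1 \<cdot> q1 = g2 \<cdot> q2"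
      using assms(2-6) unfolding hom_def by auto
    show ?thesis using mp[OF U pre] .
  qed
  have Q: "cdom C q1 = Q" using assms(4) unfolding hom_def by auto
  have T: "hom C (pbm p1 p2 q1 q2) (cdom C q1) (cdom C p1) \<and> p1 \<cdot> pbm p1 p2 q1 q2 = q1 \<and> p2 \<cdot> pbm p1 p2 q1 q2 = q2"
    unfolding pbm_def by (rule theI'[OF ex])
  then show "hom C (pbm p1 p2 q1 q2) Q (cdom C p1)" "p1 \<cdot> pbm p1 p2 q1 q2 = q1" "p2 \<cdot> pbm p1 p2 q1 q2 = q2"
    using Q by auto
  show "\<And>w. hom C w Q (cdom C p1) \<Longrightarrow> p1 \<cdot> w = q1 \<Longrightarrow> p2 \<cdot> w = q2 \<Longrightarrow> w = pbm p1 p2 q1 q2"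
    using ex T Q by blast
qed

end

lemma zcomp_face_eq:
  assumes "zlen (zsrc f) = n" "zlen (ztgt f) = Suc n" "i \<le> n" "\<forall>j<n. smap f j = face i j"
    and "is_zmap C v" "is_zmap C h" "zsrc v = zsrc h" "ztgt v = zsrc f" "ztgt h = ztgt f"
    and "\<forall>j<zlen (zsrc v). smap f (smap v j) = smap h j"
  shows "zcomp C f v = h \<longleftrightarrow>
     (\<forall>j<zlen (zsrc v). ccomp C (ssl f (smap v j)) (ssl v j) = ssl h j) \<and>
     (\<forall>k\<le>Suc n. ccomp C (rsl f k) (rsl v (cf i k)) = rsl h k)"
proof -
  have H: "k \<le> Suc n \<Longrightarrow> hat n (smap f) k = cf i k" for k
    using hat_face[of n "smap f" i k] assms(3,4) by auto
  have hz: "\<forall>j\<ge>zlen (zsrc v). smap h j = 0" "\<forall>k>Suc n. rsl h k = undefined" "\<forall>j\<ge>zlen (zsrc v). ssl h j = undefined"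
    using assms(6,7,9,2) unfolding is_zmap_def Let_def by auto
  show ?thesis
  proof
    assume e: "zcomp C f v = h"
    show "(\<forall>j<zlen (zsrc v). ccomp C (ssl f (smap v j)) (ssl v j) = ssl h j) \<and>
     (\<forall>k\<le>Suc n. ccomp C (rsl f k) (rsl v (cf i k)) = rsl h k)"
    proof (intro conjI allI impI)
      fix j assume "j < zlen (zsrc v)"
      then show "ccomp C (ssl f (smap v j)) (ssl v j) = ssl h j"
        using arg_cong[OF e, of "\<lambda>g. ssl g j"] unfolding zcomp_def by simp
    next
      fix k assume k: "k \<le> Suc n"
      then show "ccomp C (rsl f k) (rsl v (cf i k)) = rsl h k"
        using arg_cong[OF e, of "\<lambda>g. rsl g k"] H[OF k] assms(8,2,1) unfolding zcomp_def by simp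
    qed
  next
    assume c: "(\<forall>j<zlen (zsrc v). ccomp C (ssl f (smap v j)) (ssl v j) = ssl h j) \<and>
     (\<forall>k\<le>Suc n. ccomp C (rsl f k) (rsl v (cf i k)) = rsl h k)"
    show "zcomp C f v = h"
      unfolding zcomp_def
    proof (rule zmap.equality; simp)
      show "zsrc v = zsrc h" by fact
      show "ztgt f = ztgt h" using assms(9) by simp
      show "(\<lambda>j. if j < zlen (zsrc v) then smap f (smap v j) else 0) = smap h"
        using assms(10) hz(1) by (auto simp: fun_eq_iff)
      show "(\<lambda>ia. if ia \<le> zlen (ztgt f) then ccomp C (rsl f ia) (rsl v (hat (zlen (zsrc f)) (smap f) ia)) else undefined) = rsl h"
        using c hz(2) H assms(1,2) by (auto simp: fun_eq_iff)
      show "(\<lambda>j. if j < zlen (zsrc v) then ccomp C (ssl f (smap v j)) (ssl v j) else undefined) = ssl h"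
        using c hz(3) by (auto simp: fun_eq_iff)
    qed
  qed
qed



lemma cf_Suc_face: "cf i (Suc (face i k)) = Suc k"
  unfolding cf_def face_def by auto

lemma cf_le: "k \<le> Suc n \<Longrightarrow> i \<le> n \<Longrightarrow> cf i k \<le> n"
  unfolding cf_def by auto

context cat
begin

lemma backward:
  assumes fz: "is_zmap C f" and n: "zlen (zsrc f) = n" "zlen (ztgt f) = Suc n" and i: "i \<le> n"
    and fs: "\<forall>j<n. smap f j = face i j"
    and isoS: "\<forall>j<n. iso C (ssl f j)" and isoR: "\<forall>j\<le>Suc n. j \<noteq> i \<and> j \<noteq> Suc i \<longrightarrow> iso C (rsl f j)"
    and pb: "is_pullback C (rsl f i) (rsl f (Suc i)) (fwd (ztgt f) i) (bwd (ztgt f) i)"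
  shows "pi_cartesian C f"
proof -
  define A where "A = zsrc f"
  define B where "B = ztgt f"
  note fc = fz[unfolded is_zmap_face[OF n i fs]]
  have zA: "zigzag C A" and zB: "zigzag C B" using fc A_def B_def by auto
  have fR: "\<And>k. k \<le> Suc n \<Longrightarrow> hom C (rsl f k) (reg A (cf i k)) (reg B k)"
    using fc A_def B_def by auto
  have fS: "\<And>j. j < n \<Longrightarrow> hom C (ssl f j) (sing A j) (sing B (face i j))"
    using fc A_def B_def by auto
  have fsq1: "\<And>j. j < n \<Longrightarrow> ssl f j \<cdot> fwd A j = fwd B (face i j) \<cdot> rsl f (face i j)"
    and fsq2: "\<And>j. j < n \<Longrightarrow> ssl f j \<cdot> bwd A j = bwd B (face i j) \<cdot> rsl f (Suc (face i j))"
    using fc A_def B_def by auto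
  have fwdA: "\<And>j. j < n \<Longrightarrow> hom C (fwd A j) (reg A j) (sing A j)"
    and bwdA: "\<And>j. j < n \<Longrightarrow> hom C (bwd A j) (reg A (Suc j)) (sing A j)"
    using zA n unfolding zigzag_def A_def by auto
  have fwdB: "\<And>j. j < Suc n \<Longrightarrow> hom C (fwd B j) (reg B j) (sing B j)"
    and bwdB: "\<And>j. j < Suc n \<Longrightarrow> hom C (bwd B j) (reg B (Suc j)) (sing B j)"
    using zB n unfolding zigzag_def B_def by auto
  have face_lt: "\<And>j. j < n \<Longrightarrow> face i j < Suc n" unfolding face_def by auto
  show ?thesis unfolding pi_cartesian_def
  proof (intro allI impI)
    fix h u
    assume hyp: "is_zmap C h \<and> ztgt h = ztgt f \<and> monotone_map (zlen (zsrc h)) (zlen (zsrc f)) u \<and>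
        (\<forall>j<zlen (zsrc h). smap f (u j) = smap h j)"
    define X where "X = zsrc h"
    define m where "m = zlen X"
    have hz: "is_zmap C h" and ht: "ztgt h = B" using hyp B_def by auto
    have um: "monotone_map m n u" using hyp n m_def X_def by auto
    have ult: "\<And>j. j < m \<Longrightarrow> u j < n" using um unfolding monotone_map_def by auto
    have hsm: "\<And>j. j < m \<Longrightarrow> smap h j = face i (u j)"
      using hyp fs ult m_def X_def by auto
    have hH: "\<And>k. hat m (smap h) k = hat m u (cf i k)"
      by (rule hat_face_gen) (simp add: hsm)
    have zlB: "zlen B = Suc n" using n B_def by simp
    have zlA: "zlen A = n" using n A_def by simp
    note hc0 = hz[unfolded is_zmap_def Let_def, folded X_def m_def, unfolded ht zlB]
    have zX: "zigzag C X" using hc0 by blast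
    have hR: "\<And>k. k \<le> Suc n \<Longrightarrow> hom C (rsl h k) (reg X (hat m u (cf i k))) (reg B k)"
      using hc0 hH by auto
    have hS: "\<And>j. j < m \<Longrightarrow> hom C (ssl h j) (sing X j) (sing B (face i (u j)))"
      using hc0 hsm by auto
    have hcl: "\<And>k. k < Suc n \<Longrightarrow> (let P = {j. j < m \<and> smap h j = k} in
        (P \<noteq> {} \<longrightarrow>
           ssl h (Min P) \<cdot> fwd X (Min P) = fwd B k \<cdot> rsl h k \<and>
           ssl h (Max P) \<cdot> bwd X (Max P) = bwd B k \<cdot> rsl h (Suc k) \<and>
           (\<forall>j. Min P \<le> j \<and> j < Max P \<longrightarrow> ssl h j \<cdot> bwd X j = ssl h (Suc j) \<cdot> fwd X (Suc j))) \<and>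
        (P = {} \<longrightarrow> fwd B k \<cdot> rsl h k = bwd B k \<cdot> rsl h (Suc k)))"
      using hc0 unfolding Let_def by blast
    have hz0: "\<forall>j\<ge>m. smap h j = 0" "\<forall>k>Suc n. rsl h k = undefined" "\<forall>j\<ge>m. ssl h j = undefined"
      using hc0 by auto
    have fwdX: "\<And>j. j < m \<Longrightarrow> hom C (fwd X j) (reg X j) (sing X j)"
      and bwdX: "\<And>j. j < m \<Longrightarrow> hom C (bwd X j) (reg X (Suc j)) (sing X j)"
      using zX m_def unfolding zigzag_def by auto
    have cfi: "cf i i = i" "cf i (Suc i) = i" unfolding cf_def by auto
    have fRi: "hom C (rsl f i) (reg A i) (reg B i)" using fR[of i] cfi i by auto
    have fRi1: "hom C (rsl f (Suc i)) (reg A i) (reg B (Suc i))" using fR[of "Suc i"] cfi i by auto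
    have hRi: "hom C (rsl h i) (reg X (hat m u i)) (reg B i)" using hR[of i] cfi i by auto
    have hRi1: "hom C (rsl h (Suc i)) (reg X (hat m u i)) (reg B (Suc i))" using hR[of "Suc i"] cfi i by auto
    have Pi: "{j. j < m \<and> smap h j = i} = {}" using hsm face_ne by auto
    have hsq: "fwd B i \<cdot> rsl h i = bwd B i \<cdot> rsl h (Suc i)"
      using hcl[of i] i Pi unfolding Let_def by simp
    have cdfi: "cdom C (rsl f i) = reg A i" using fRi unfolding hom_def by auto
    have ii: "i < Suc n" using i by simp
    note PB = pbm_props[OF pb[folded B_def] fwdB[OF ii] bwdB[OF ii] hRi hRi1 hsq, unfolded cdfi]
    define VR where "VR = (\<lambda>k. if k < i then cinv (rsl f k) \<cdot> rsl h k
        else if k = i then pbm (rsl f i) (rsl f (Suc i)) (rsl h i) (rsl h (Suc i))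
        else if k \<le> n then cinv (rsl f (Suc k)) \<cdot> rsl h (Suc k) else undefined)"
    define VS where "VS = (\<lambda>j. if j < m then cinv (ssl f (u j)) \<cdot> ssl h j else undefined)"
    define v where "v = \<lparr>zsrc = X, ztgt = A, smap = (\<lambda>j. if j < m then u j else 0), rsl = VR, ssl = VS\<rparr>"
    have isoRk: "\<And>k. k \<le> Suc n \<Longrightarrow> k \<noteq> i \<Longrightarrow> k \<noteq> Suc i \<Longrightarrow> iso C (rsl f k)" using isoR by auto
    have VRhom: "\<And>k. k \<le> n \<Longrightarrow> hom C (VR k) (reg X (hat m u k)) (reg A k)"
    proof -
      fix k assume k: "k \<le> n"
      consider "k < i" | "k = i" | "i < k" by linarith
      then show "hom C (VR k) (reg X (hat m u k)) (reg A k)"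
      proof cases
        case 1
        have c: "cf i k = k" using 1 unfolding cf_def by auto
        have a: "hom C (rsl f k) (reg A k) (reg B k)" using fR[of k] k c by auto
        have b: "hom C (rsl h k) (reg X (hat m u k)) (reg B k)" using hR[of k] k c by auto
        show ?thesis using 1 hom_comp[OF b iso_inv(1)[OF isoRk a]] k unfolding VR_def by auto
      next
        case 2 then show ?thesis using PB(1) unfolding VR_def by simp
      next
        case 3
        have c: "cf i (Suc k) = k" using 3 unfolding cf_def by auto
        have a: "hom C (rsl f (Suc k)) (reg A k) (reg B (Suc k))" using fR[of "Suc k"] k c by auto
        have b: "hom C (rsl h (Suc k)) (reg X (hat m u k)) (reg B (Suc k))" using hR[of "Suc k"] k c by auto
        show ?thesis using 3 hom_comp[OF b iso_inv(1)[OF isoRk a]] k unfolding VR_def by auto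
      qed
    qed
    have KEY: "\<And>k. k \<le> Suc n \<Longrightarrow> rsl f k \<cdot> VR (cf i k) = rsl h k"
    proof -
      fix k assume k: "k \<le> Suc n"
      consider "k < i" | "k = i" | "k = Suc i" | "Suc i < k" by linarith
      then show "rsl f k \<cdot> VR (cf i k) = rsl h k"
      proof cases
        case 1
        have c: "cf i k = k" using 1 unfolding cf_def by auto
        have a: "hom C (rsl f k) (reg A k) (reg B k)" using fR[of k] k c by auto
        have b: "hom C (rsl h k) (reg X (hat m u k)) (reg B k)" using hR[of k] k c by auto
        show ?thesis using 1 c iso_cancel_inv[OF isoRk a b] k unfolding VR_def by auto
      next
        case 2 then show ?thesis using PB(2) cfi unfolding VR_def by simp
      next
        case 3 then show ?thesis using PB(3) cfi unfolding VR_def by simp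
      next
        case 4
        have c: "cf i k = k - 1" using 4 unfolding cf_def by auto
        have a: "hom C (rsl f k) (reg A (k - 1)) (reg B k)" using fR[of k] k c by auto
        have b: "hom C (rsl h k) (reg X (hat m u (k - 1))) (reg B k)" using hR[of k] k c by auto
        have "VR (k - 1) = cinv (rsl f k) \<cdot> rsl h k" using 4 k unfolding VR_def by auto
        then show ?thesis using c iso_cancel_inv[OF isoRk a b] k 4 by auto
      qed
    qed
    have VShom: "\<And>j. j < m \<Longrightarrow> hom C (VS j) (sing X j) (sing A (u j))"
      using hom_comp[OF hS iso_inv(1)[OF _ fS]] isoS ult unfolding VS_def by auto
    have VSeq: "\<And>j. j < m \<Longrightarrow> ssl f (u j) \<cdot> VS j = ssl h j"
      using iso_cancel_inv[OF _ fS hS] isoS ult unfolding VS_def by auto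
    have sqF: "\<And>k. k < n \<Longrightarrow> ssl f k \<cdot> (fwd A k \<cdot> VR k) = fwd B (face i k) \<cdot> rsl h (face i k)"
    proof -
      fix k assume k: "k < n"
      have c: "cf i (face i k) = k" by (rule cf_face)
      have a: "hom C (rsl f (face i k)) (reg A k) (reg B (face i k))" using fR[of "face i k"] face_lt[OF k] c by auto
      have "ssl f k \<cdot> (fwd A k \<cdot> VR k) = (ssl f k \<cdot> fwd A k) \<cdot> VR k"
        using comp_assoc[OF VRhom fwdA fS] k by auto
      also have "\<dots> = (fwd B (face i k) \<cdot> rsl f (face i k)) \<cdot> VR k" using fsq1 k by simp
      also have "\<dots> = fwd B (face i k) \<cdot> (rsl f (face i k) \<cdot> VR k)"
        using comp_assoc[OF VRhom a fwdB] k face_lt by auto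
      also have "\<dots> = fwd B (face i k) \<cdot> rsl h (face i k)" using KEY[of "face i k"] c face_lt[OF k] by simp
      finally show "ssl f k \<cdot> (fwd A k \<cdot> VR k) = fwd B (face i k) \<cdot> rsl h (face i k)" .
    qed
    have sqB: "\<And>k. k < n \<Longrightarrow> ssl f k \<cdot> (bwd A k \<cdot> VR (Suc k)) = bwd B (face i k) \<cdot> rsl h (Suc (face i k))"
    proof -
      fix k assume k: "k < n"
      have c: "cf i (Suc (face i k)) = Suc k" by (rule cf_Suc_face)
      have fl: "Suc (face i k) \<le> Suc n" using face_lt[OF k] by simp
      have a: "hom C (rsl f (Suc (face i k))) (reg A (Suc k)) (reg B (Suc (face i k)))" using fR[OF fl] c by auto
      have vr: "hom C (VR (Suc k)) (reg X (hat m u (Suc k))) (reg A (Suc k))" using VRhom k by auto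
      have "ssl f k \<cdot> (bwd A k \<cdot> VR (Suc k)) = (ssl f k \<cdot> bwd A k) \<cdot> VR (Suc k)"
        using comp_assoc[OF vr bwdA fS] k by auto
      also have "\<dots> = (bwd B (face i k) \<cdot> rsl f (Suc (face i k))) \<cdot> VR (Suc k)" using fsq2 k by simp
      also have "\<dots> = bwd B (face i k) \<cdot> (rsl f (Suc (face i k)) \<cdot> VR (Suc k))"
        using comp_assoc[OF vr a bwdB] k face_lt by auto
      also have "\<dots> = bwd B (face i k) \<cdot> rsl h (Suc (face i k))" using KEY[OF fl] c by simp
      finally show "ssl f k \<cdot> (bwd A k \<cdot> VR (Suc k)) = bwd B (face i k) \<cdot> rsl h (Suc (face i k))" .
    qed
    have sqS: "\<And>j z c. j < m \<Longrightarrow> hom C z c (sing X j) \<Longrightarrow> ssl f (u j) \<cdot> (VS j \<cdot> z) = ssl h j \<cdot> z"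
    proof -
      fix j z c assume j: "j < m" and z: "hom C z c (sing X j)"
      have "ssl f (u j) \<cdot> (VS j \<cdot> z) = (ssl f (u j) \<cdot> VS j) \<cdot> z"
        using comp_assoc[OF z VShom[OF j] fS[OF ult[OF j]]] by simp
      then show "ssl f (u j) \<cdot> (VS j \<cdot> z) = ssl h j \<cdot> z" using VSeq[OF j] by simp
    qed
    have hatv: "\<And>k. hat m (\<lambda>j. if j < m then u j else 0) k = hat m u k"
      by (rule hat_cong) simp
    have clause: "\<forall>k<n. let P = {j. j < m \<and> (if j < m then u j else 0) = k} in
        (P \<noteq> {} \<longrightarrow>
           VS (Min P) \<cdot> fwd X (Min P) = fwd A k \<cdot> VR k \<and>
           VS (Max P) \<cdot> bwd X (Max P) = bwd A k \<cdot> VR (Suc k) \<and>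
           (\<forall>j. Min P \<le> j \<and> j < Max P \<longrightarrow> VS j \<cdot> bwd X j = VS (Suc j) \<cdot> fwd X (Suc j))) \<and>
        (P = {} \<longrightarrow> fwd A k \<cdot> VR k = bwd A k \<cdot> VR (Suc k))"
    proof (intro allI impI)
      fix k assume k: "k < n"
      define P where "P = {j. j < m \<and> u j = k}"
      have P': "{j. j < m \<and> (if j < m then u j else 0) = k} = P" unfolding P_def by auto
      have Ph: "{j. j < m \<and> smap h j = face i k} = P" unfolding P_def using hsm face_inj by auto
      have hk: "let P = {j. j < m \<and> smap h j = face i k} in
        (P \<noteq> {} \<longrightarrow>
           ssl h (Min P) \<cdot> fwd X (Min P) = fwd B (face i k) \<cdot> rsl h (face i k) \<and>
           ssl h (Max P) \<cdot> bwd X (Max P) = bwd B (face i k) \<cdot> rsl h (Suc (face i k)) \<and>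
           (\<forall>j. Min P \<le> j \<and> j < Max P \<longrightarrow> ssl h j \<cdot> bwd X j = ssl h (Suc j) \<cdot> fwd X (Suc j))) \<and>
        (P = {} \<longrightarrow> fwd B (face i k) \<cdot> rsl h (face i k) = bwd B (face i k) \<cdot> rsl h (Suc (face i k)))"
        using hcl[OF face_lt[OF k]] .
      note hk' = hk[unfolded Let_def Ph]
      have isk: "iso C (ssl f k)" using isoS k by auto
      have fSk: "hom C (ssl f k) (sing A k) (sing B (face i k))" using fS k by auto
      have vr0: "hom C (VR k) (reg X (hat m u k)) (reg A k)" using VRhom k by auto
      have vr1: "hom C (VR (Suc k)) (reg X (hat m u (Suc k))) (reg A (Suc k))" using VRhom k by auto
      have L1: "fwd A k \<cdot> VR k = cinv (ssl f k) \<cdot> (fwd B (face i k) \<cdot> rsl h (face i k))"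
        by (rule iso_solve[OF isk fSk hom_comp[OF vr0 fwdA[OF k]] sqF[OF k]])
      have L2: "bwd A k \<cdot> VR (Suc k) = cinv (ssl f k) \<cdot> (bwd B (face i k) \<cdot> rsl h (Suc (face i k)))"
        by (rule iso_solve[OF isk fSk hom_comp[OF vr1 bwdA[OF k]] sqB[OF k]])
      have LF: "\<And>j. j \<in> P \<Longrightarrow> VS j \<cdot> fwd X j = cinv (ssl f k) \<cdot> (ssl h j \<cdot> fwd X j)"
      proof -
        fix j assume "j \<in> P" then have j: "j < m" "u j = k" unfolding P_def by auto
        show "VS j \<cdot> fwd X j = cinv (ssl f k) \<cdot> (ssl h j \<cdot> fwd X j)"
        proof -
          have h1: "hom C (VS j \<cdot> fwd X j) (reg X j) (sing A k)"
            using hom_comp[OF fwdX[OF j(1)] VShom[OF j(1)]] j(2) by simp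
          have h2: "ssl f k \<cdot> (VS j \<cdot> fwd X j) = ssl h j \<cdot> fwd X j"
            using sqS[OF j(1) fwdX[OF j(1)]] j(2) by simp
          show ?thesis by (rule iso_solve[OF isk fSk h1 h2])
        qed
      qed
      have LB: "\<And>j. j \<in> P \<Longrightarrow> VS j \<cdot> bwd X j = cinv (ssl f k) \<cdot> (ssl h j \<cdot> bwd X j)"
      proof -
        fix j assume "j \<in> P" then have j: "j < m" "u j = k" unfolding P_def by auto
        show "VS j \<cdot> bwd X j = cinv (ssl f k) \<cdot> (ssl h j \<cdot> bwd X j)"
        proof -
          have h1: "hom C (VS j \<cdot> bwd X j) (reg X (Suc j)) (sing A k)"
            using hom_comp[OF bwdX[OF j(1)] VShom[OF j(1)]] j(2) by simp
          have h2: "ssl f k \<cdot> (VS j \<cdot> bwd X j) = ssl h j \<cdot> bwd X j"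
            using sqS[OF j(1) bwdX[OF j(1)]] j(2) by simp
          show ?thesis by (rule iso_solve[OF isk fSk h1 h2])
        qed
      qed
      have finP: "finite P" unfolding P_def by simp
      show "let P = {j. j < m \<and> (if j < m then u j else 0) = k} in
        (P \<noteq> {} \<longrightarrow>
           VS (Min P) \<cdot> fwd X (Min P) = fwd A k \<cdot> VR k \<and>
           VS (Max P) \<cdot> bwd X (Max P) = bwd A k \<cdot> VR (Suc k) \<and>
           (\<forall>j. Min P \<le> j \<and> j < Max P \<longrightarrow> VS j \<cdot> bwd X j = VS (Suc j) \<cdot> fwd X (Suc j))) \<and>
        (P = {} \<longrightarrow> fwd A k \<cdot> VR k = bwd A k \<cdot> VR (Suc k))"
        unfolding Let_def P'
      proof (intro conjI impI allI)
        assume ne: "P \<noteq> {}"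
        have mn: "Min P \<in> P" "Max P \<in> P" using finP ne by auto
        show "VS (Min P) \<cdot> fwd X (Min P) = fwd A k \<cdot> VR k"
          using LF[OF mn(1)] L1 hk' ne by simp
        show "VS (Max P) \<cdot> bwd X (Max P) = bwd A k \<cdot> VR (Suc k)"
          using LB[OF mn(2)] L2 hk' ne by simp
        fix j assume j: "Min P \<le> j \<and> j < Max P"
        have jm: "j < m" "Suc j < m" using mn j unfolding P_def by auto
        have mx: "Max P < m" using mn(2) unfolding P_def by auto
        have "u (Min P) \<le> u j" "u j \<le> u (Max P)" "u (Min P) \<le> u (Suc j)" "u (Suc j) \<le> u (Max P)"
          using um j jm mx unfolding monotone_map_def by auto
        then have "u j = k" "u (Suc j) = k" using mn unfolding P_def by auto
        then have jP: "j \<in> P" "Suc j \<in> P" using jm unfolding P_def by auto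
        show "VS j \<cdot> bwd X j = VS (Suc j) \<cdot> fwd X (Suc j)"
          using LB[OF jP(1)] LF[OF jP(2)] hk' ne j by simp
      next
        assume e: "P = {}"
        show "fwd A k \<cdot> VR k = bwd A k \<cdot> VR (Suc k)"
          using L1 L2 hk' e by simp
      qed
    qed
    have vz: "is_zmap C v"
    proof -
      have m0: "monotone_map m n (\<lambda>j. if j < m then u j else 0)" using um unfolding monotone_map_def by auto
      have u1: "\<forall>k>n. VR k = undefined" using i unfolding VR_def by auto
      have u2: "\<forall>j\<ge>m. VS j = undefined" unfolding VS_def by auto
      have u3: "\<forall>k\<le>n. hom C (VR k) (reg X (hat m u k)) (reg A k)" using VRhom by auto
      have u4: "\<forall>j<m. hom C (VS j) (sing X j) (sing A (if j < m then u j else 0))" using VShom by simp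
      show ?thesis
        unfolding is_zmap_def Let_def v_def zmap.select_convs m_def[symmetric] zlA hatv
        using zX zA m0 u1 u2 u3 u4 clause[unfolded Let_def] by auto
    qed
    have smv: "\<forall>j<zlen (zsrc v). smap f (smap v j) = smap h j"
      using hyp unfolding v_def m_def X_def by auto
    have e1: "zsrc v = zsrc h" "ztgt v = zsrc f" "ztgt h = ztgt f" using ht by (simp_all add: v_def X_def A_def B_def)
    have zv: "zcomp C f v = h"
      unfolding zcomp_face_eq[OF n i fs vz hz e1 smv]
      using VSeq KEY by (simp add: v_def m_def X_def)
    show "\<exists>!v. is_zmap C v \<and> zsrc v = zsrc h \<and> ztgt v = zsrc f \<and>
             (\<forall>j<zlen (zsrc h). smap v j = u j) \<and> zcomp C f v = h"
    proof (rule ex1I[of _ v])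
      show "is_zmap C v \<and> zsrc v = zsrc h \<and> ztgt v = zsrc f \<and>
             (\<forall>j<zlen (zsrc h). smap v j = u j) \<and> zcomp C f v = h"
        using vz zv unfolding v_def X_def A_def m_def by auto
    next
      fix v' assume v': "is_zmap C v' \<and> zsrc v' = zsrc h \<and> ztgt v' = zsrc f \<and>
             (\<forall>j<zlen (zsrc h). smap v' j = u j) \<and> zcomp C f v' = h"
      have vz': "is_zmap C v'" and vs: "zsrc v' = X" and vt: "ztgt v' = A"
        and vsm: "\<And>j. j < m \<Longrightarrow> smap v' j = u j" and ve: "zcomp C f v' = h"
        using v' X_def A_def m_def by auto
      have smv': "\<forall>j<zlen (zsrc v'). smap f (smap v' j) = smap h j"
        using hyp vsm vs unfolding m_def X_def by auto
      have CC: "(\<forall>j<zlen (zsrc v'). ssl f (smap v' j) \<cdot> ssl v' j = ssl h j) \<and>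
        (\<forall>k\<le>Suc n. rsl f k \<cdot> rsl v' (cf i k) = rsl h k)"
        using ve unfolding zcomp_face_eq[OF n i fs vz' hz vs[unfolded X_def] vt[unfolded A_def] ht[unfolded B_def] smv'] .
      have C1: "\<And>j. j < m \<Longrightarrow> ssl f (u j) \<cdot> ssl v' j = ssl h j" using CC vs vsm m_def by auto
      have C2: "\<And>k. k \<le> Suc n \<Longrightarrow> rsl f k \<cdot> rsl v' (cf i k) = rsl h k" using CC by auto
      note vc = vz'[unfolded is_zmap_def Let_def vs vt zlA, folded m_def]
      have hatv': "\<And>k. hat m (smap v') k = hat m u k" by (rule hat_cong) (simp add: vsm)
      have v'R: "\<And>k. k \<le> n \<Longrightarrow> hom C (rsl v' k) (reg X (hat m u k)) (reg A k)"
        using vc hatv' by auto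
      have v'S: "\<And>j. j < m \<Longrightarrow> hom C (ssl v' j) (sing X j) (sing A (u j))"
        using vc vsm by auto
      have v'0: "\<forall>j\<ge>m. smap v' j = 0" "\<forall>k>n. rsl v' k = undefined" "\<forall>j\<ge>m. ssl v' j = undefined"
        using vc by auto
      show "v' = v"
      proof (rule zmap.equality)
        show "zsrc v' = zsrc v" using vs v_def by simp
        show "ztgt v' = ztgt v" using vt v_def by simp
        show "smap v' = smap v" using vsm v'0 unfolding v_def by (auto simp: fun_eq_iff)
        show "ssl v' = ssl v"
        proof (rule ext)
          fix j
          show "ssl v' j = ssl v j"
          proof (cases "j < m")
            case True
            show ?thesis using iso_solve[OF _ fS v'S[OF True] C1[OF True]] isoS ult[OF True] True
              unfolding v_def VS_def by simp
          next
            case False then show ?thesis using v'0 unfolding v_def VS_def by simp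
          qed
        qed
        show "rsl v' = rsl v"
        proof (rule ext)
          fix k
          consider "k < i" | "k = i" | "i < k \<and> k \<le> n" | "n < k" by linarith
          then show "rsl v' k = rsl v k"
          proof cases
            case 1
            have c: "cf i k = k" using 1 unfolding cf_def by auto
            have k: "k \<le> Suc n" "k \<le> n" using 1 i by auto
            have a: "hom C (rsl f k) (reg A k) (reg B k)" using fR[OF k(1)] c by auto
            show ?thesis using iso_solve[OF isoRk[OF k(1)] a v'R[OF k(2)] C2[OF k(1), unfolded c]] 1
              unfolding v_def VR_def by simp
          next
            case 2
            have "rsl v' i = pbm (rsl f i) (rsl f (Suc i)) (rsl h i) (rsl h (Suc i))"
              by (rule PB(4)) (use v'R[of i] i C2[of i] C2[of "Suc i"] cfi in auto)
            then show ?thesis using 2 unfolding v_def VR_def by simp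
          next
            case 3
            have c: "cf i (Suc k) = k" using 3 unfolding cf_def by auto
            have k: "Suc k \<le> Suc n" "k \<le> n" using 3 by auto
            have a: "hom C (rsl f (Suc k)) (reg A k) (reg B (Suc k))" using fR[OF k(1)] c by auto
            show ?thesis using iso_solve[OF isoRk[OF k(1)] a v'R[OF k(2)] C2[OF k(1), unfolded c]] 3
              unfolding v_def VR_def by simp
          next
            case 4 then show ?thesis using v'0 i unfolding v_def VR_def by simp
          qed
        qed
        show "zmap.more v' = zmap.more v" by simp
      qed
    qed
  qed
qed

end



locale fsetup = cat +
  fixes f :: "('a,'b) zmap" and n i :: nat
  assumes fz: "is_zmap C f" and n1: "zlen (zsrc f) = n" and n2: "zlen (ztgt f) = Suc n"
    and ile: "i \<le> n" and fs: "\<forall>j<n. smap f j = face i j"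
begin

abbreviation "A \<equiv> zsrc f"
abbreviation "B \<equiv> ztgt f"

lemma fc: "zigzag C A \<and> zigzag C B \<and> (\<forall>j\<ge>n. smap f j = 0) \<and>
     (\<forall>k>Suc n. rsl f k = undefined) \<and> (\<forall>j\<ge>n. ssl f j = undefined) \<and>
     (\<forall>k\<le>Suc n. hom C (rsl f k) (reg A (cf i k)) (reg B k)) \<and>
     (\<forall>j<n. hom C (ssl f j) (sing A j) (sing B (face i j))) \<and>
     (\<forall>j<n. ssl f j \<cdot> fwd A j = fwd B (face i j) \<cdot> rsl f (face i j) \<and>
            ssl f j \<cdot> bwd A j = bwd B (face i j) \<cdot> rsl f (Suc (face i j))) \<and>
     fwd B i \<cdot> rsl f i = bwd B i \<cdot> rsl f (Suc i)"
  using fz unfolding is_zmap_face[OF n1 n2 ile fs] .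

lemma zA: "zigzag C A" and zB: "zigzag C B" using fc by auto
lemma fR: "k \<le> Suc n \<Longrightarrow> hom C (rsl f k) (reg A (cf i k)) (reg B k)" using fc by auto
lemma fS: "j < n \<Longrightarrow> hom C (ssl f j) (sing A j) (sing B (face i j))" using fc by auto
lemma fsq1: "j < n \<Longrightarrow> ssl f j \<cdot> fwd A j = fwd B (face i j) \<cdot> rsl f (face i j)" using fc by auto
lemma fsq2: "j < n \<Longrightarrow> ssl f j \<cdot> bwd A j = bwd B (face i j) \<cdot> rsl f (Suc (face i j))" using fc by auto
lemma fsqi: "fwd B i \<cdot> rsl f i = bwd B i \<cdot> rsl f (Suc i)" using fc by auto
lemma fwdA: "j < n \<Longrightarrow> hom C (fwd A j) (reg A j) (sing A j)"
  and bwdA: "j < n \<Longrightarrow> hom C (bwd A j) (reg A (Suc j)) (sing A j)"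
  using zA n1 unfolding zigzag_def by auto
lemma fwdB: "j < Suc n \<Longrightarrow> hom C (fwd B j) (reg B j) (sing B j)"
  and bwdB: "j < Suc n \<Longrightarrow> hom C (bwd B j) (reg B (Suc j)) (sing B j)"
  using zB n2 unfolding zigzag_def by auto
lemma regA: "k \<le> n \<Longrightarrow> reg A k \<in> Ob C" and regB: "k \<le> Suc n \<Longrightarrow> reg B k \<in> Ob C"
  and singA: "j < n \<Longrightarrow> sing A j \<in> Ob C" and singB: "j < Suc n \<Longrightarrow> sing B j \<in> Ob C"
  using zA zB n1 n2 unfolding zigzag_def by auto
lemma face_lt: "j < n \<Longrightarrow> face i j < Suc n" unfolding face_def by auto

definition tz :: "'a \<Rightarrow> 'b \<Rightarrow> 'b \<Rightarrow> ('a,'b) zigzag" where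
  "tz Q q1 q2 = \<lparr>zlen = n,
     reg = (\<lambda>k. if k < i then reg B k else if k = i then Q else reg B (Suc k)),
     sing = (\<lambda>j. sing B (face i j)),
     fwd = (\<lambda>j. if j < i then fwd B j else if j = i then fwd B (Suc i) \<cdot> q2 else fwd B (Suc j)),
     bwd = (\<lambda>j. if Suc j < i then bwd B j else if Suc j = i then bwd B j \<cdot> q1 else bwd B (Suc j))\<rparr>"

definition th :: "'a \<Rightarrow> 'b \<Rightarrow> 'b \<Rightarrow> ('a,'b) zmap" where
  "th Q q1 q2 = \<lparr>zsrc = tz Q q1 q2, ztgt = B, smap = (\<lambda>j. if j < n then face i j else 0),
     rsl = (\<lambda>k. if k = i then q1 else if k = Suc i then q2 else if k \<le> Suc n then cid C (reg B k) else undefined),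
     ssl = (\<lambda>j. if j < n then cid C (sing B (face i j)) else undefined)\<rparr>"

definition tzok :: "'a \<Rightarrow> 'b \<Rightarrow> 'b \<Rightarrow> bool" where
  "tzok Q q1 q2 \<longleftrightarrow> Q \<in> Ob C \<and> hom C q1 Q (reg B i) \<and> hom C q2 Q (reg B (Suc i)) \<and>
     fwd B i \<cdot> q1 = bwd B i \<cdot> q2"

lemma tz_simps: "zlen (tz Q q1 q2) = n"
  "reg (tz Q q1 q2) k = (if k < i then reg B k else if k = i then Q else reg B (Suc k))"
  "sing (tz Q q1 q2) j = sing B (face i j)"
  unfolding tz_def by simp_all

lemma tz_fwd: "j < n \<Longrightarrow> tzok Q q1 q2 \<Longrightarrow> hom C (fwd (tz Q q1 q2) j) (reg (tz Q q1 q2) j) (sing (tz Q q1 q2) j)"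
proof -
  assume j: "j < n" and ok: "tzok Q q1 q2"
  consider "j < i" | "j = i" | "i < j" by linarith
  then show ?thesis
  proof cases
    case 1 then show ?thesis using fwdB[of j] j unfolding tz_def face_def by auto
  next
    case 2
    have "hom C (fwd B (Suc i) \<cdot> q2) Q (sing B (Suc i))"
      using hom_comp[of q2 Q "reg B (Suc i)"] fwdB[of "Suc i"] ok j 2 unfolding tzok_def by auto
    then show ?thesis using 2 unfolding tz_def face_def by auto
  next
    case 3 then show ?thesis using fwdB[of "Suc j"] j unfolding tz_def face_def by auto
  qed
qed

lemma tz_bwd: "j < n \<Longrightarrow> tzok Q q1 q2 \<Longrightarrow> hom C (bwd (tz Q q1 q2) j) (reg (tz Q q1 q2) (Suc j)) (sing (tz Q q1 q2) j)"
proof -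
  assume j: "j < n" and ok: "tzok Q q1 q2"
  consider "Suc j < i" | "Suc j = i" | "i < Suc j" by linarith
  then show ?thesis
  proof cases
    case 1 then show ?thesis using bwdB[of j] j unfolding tz_def face_def by auto
  next
    case 2
    have "hom C (bwd B j \<cdot> q1) Q (sing B j)"
      using hom_comp[of q1 Q "reg B i"] bwdB[of j] ok j 2 unfolding tzok_def by auto
    then show ?thesis using 2 unfolding tz_def face_def by auto
  next
    case 3 then show ?thesis using bwdB[of "Suc j"] j unfolding tz_def face_def by auto
  qed
qed

lemma tz_zigzag: "tzok Q q1 q2 \<Longrightarrow> zigzag C (tz Q q1 q2)"
  unfolding zigzag_def
proof (intro conjI allI impI)
  assume ok: "tzok Q q1 q2"
  fix k assume k: "k \<le> zlen (tz Q q1 q2)"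
  then show "reg (tz Q q1 q2) k \<in> Ob C"
    using regB[of k] regB[of "Suc k"] ok unfolding tz_simps tzok_def by auto
next
  fix j assume ok: "tzok Q q1 q2" and j: "j < zlen (tz Q q1 q2)"
  then show "sing (tz Q q1 q2) j \<in> Ob C" using singB face_lt unfolding tz_simps by auto
  show "hom C (fwd (tz Q q1 q2) j) (reg (tz Q q1 q2) j) (sing (tz Q q1 q2) j)"
    using tz_fwd ok j unfolding tz_simps by auto
  show "hom C (bwd (tz Q q1 q2) j) (reg (tz Q q1 q2) (Suc j)) (sing (tz Q q1 q2) j)"
    using tz_bwd ok j unfolding tz_simps by auto
qed

lemma th_simps: "zsrc (th Q q1 q2) = tz Q q1 q2" "ztgt (th Q q1 q2) = B"
  "smap (th Q q1 q2) j = (if j < n then face i j else 0)"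
  "rsl (th Q q1 q2) k = (if k = i then q1 else if k = Suc i then q2 else if k \<le> Suc n then cid C (reg B k) else undefined)"
  "ssl (th Q q1 q2) j = (if j < n then cid C (sing B (face i j)) else undefined)"
  unfolding th_def by simp_all

lemma th_zmap:
  assumes ok: "tzok Q q1 q2"
  shows "is_zmap C (th Q q1 q2)"
proof -
  let ?X = "tz Q q1 q2" and ?h = "th Q q1 q2"
  have l: "zlen (zsrc ?h) = n" "zlen (ztgt ?h) = Suc n" "\<forall>j<n. smap ?h j = face i j"
    using n2 by (simp_all add: th_simps tz_simps)
  have okk: "Q \<in> Ob C" "hom C q1 Q (reg B i)" "hom C q2 Q (reg B (Suc i))" "fwd B i \<cdot> q1 = bwd B i \<cdot> q2"
    using ok unfolding tzok_def by auto
  have R: "\<forall>k\<le>Suc n. hom C (rsl ?h k) (reg ?X (cf i k)) (reg B k)"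
  proof (intro allI impI)
    fix k assume k: "k \<le> Suc n"
    consider "k < i" | "k = i" | "k = Suc i" | "Suc i < k" by linarith
    then show "hom C (rsl ?h k) (reg ?X (cf i k)) (reg B k)"
    proof cases
      case 1 then show ?thesis using id_hom[OF regB[OF k]] k unfolding th_simps tz_simps cf_def by auto
    next
      case 2 then show ?thesis using okk unfolding th_simps tz_simps cf_def by auto
    next
      case 3 then show ?thesis using okk unfolding th_simps tz_simps cf_def by auto
    next
      case 4 then show ?thesis using id_hom[OF regB[OF k]] k unfolding th_simps tz_simps cf_def by auto
    qed
  qed
  have S: "\<forall>j<n. hom C (ssl ?h j) (sing ?X j) (sing B (face i j))"
    using id_hom[OF singB[OF face_lt]] unfolding th_simps tz_simps by auto
  have SQ: "\<forall>j<n. ssl ?h j \<cdot> fwd ?X j = fwd B (face i j) \<cdot> rsl ?h (face i j) \<and>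
            ssl ?h j \<cdot> bwd ?X j = bwd B (face i j) \<cdot> rsl ?h (Suc (face i j))"
  proof (intro allI impI conjI)
    fix j assume j: "j < n"
    have e1: "ssl ?h j \<cdot> fwd ?X j = fwd ?X j"
      using comp_id_l[OF tz_fwd[OF j ok]] j unfolding th_simps tz_simps by simp
    have e2: "ssl ?h j \<cdot> bwd ?X j = bwd ?X j"
      using comp_id_l[OF tz_bwd[OF j ok]] j unfolding th_simps tz_simps by simp
    consider "j < i" | "j = i" | "i < j" by linarith
    then show "ssl ?h j \<cdot> fwd ?X j = fwd B (face i j) \<cdot> rsl ?h (face i j)"
    proof cases
      case 1 then show ?thesis unfolding e1
        using comp_id_r[OF fwdB[of j]] j unfolding th_simps tz_def face_def by auto
    next
      case 2 then show ?thesis unfolding e1 unfolding th_simps tz_def face_def by auto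
    next
      case 3 then show ?thesis unfolding e1
        using comp_id_r[OF fwdB[of "Suc j"]] j unfolding th_simps tz_def face_def by auto
    qed
    consider "Suc j < i" | "Suc j = i" | "i < Suc j" by linarith
    then show "ssl ?h j \<cdot> bwd ?X j = bwd B (face i j) \<cdot> rsl ?h (Suc (face i j))"
    proof cases
      case 1 then show ?thesis unfolding e2
        using comp_id_r[OF bwdB[of j]] j unfolding th_simps tz_def face_def by auto
    next
      case 2 then show ?thesis unfolding e2 unfolding th_simps tz_def face_def by auto
    next
      case 3 then show ?thesis unfolding e2
        using comp_id_r[OF bwdB[of "Suc j"]] j unfolding th_simps tz_def face_def by auto
    qed
  qed
  have I: "fwd B i \<cdot> rsl ?h i = bwd B i \<cdot> rsl ?h (Suc i)" using okk unfolding th_simps by simp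
  show ?thesis
    unfolding is_zmap_face[OF l(1) l(2) ile l(3)]
    using tz_zigzag[OF ok] zB R S SQ I ile unfolding th_simps by auto
qed

end



context fsetup
begin

lemma lift:
  assumes cart: "pi_cartesian C f" and ok: "tzok Q q1 q2"
  shows "\<exists>!v. is_zmap C v \<and> zsrc v = tz Q q1 q2 \<and> ztgt v = A \<and> (\<forall>j<n. smap v j = j) \<and> zcomp C f v = th Q q1 q2"
proof -
  have pre: "is_zmap C (th Q q1 q2) \<and> ztgt (th Q q1 q2) = ztgt f \<and>
        monotone_map (zlen (zsrc (th Q q1 q2))) (zlen (zsrc f)) (\<lambda>j. j) \<and>
        (\<forall>j<zlen (zsrc (th Q q1 q2)). smap f j = smap (th Q q1 q2) j)"
    using th_zmap[OF ok] fs n1 unfolding th_simps tz_simps monotone_map_def by auto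
  show ?thesis using cart[unfolded pi_cartesian_def, rule_format, OF pre] unfolding th_simps tz_simps .
qed

lemma lift_props:
  assumes ok: "tzok Q q1 q2" and vz: "is_zmap C v" and vs: "zsrc v = tz Q q1 q2" and vt: "ztgt v = A"
    and vsm: "\<forall>j<n. smap v j = j" and ve: "zcomp C f v = th Q q1 q2"
  shows "\<And>j. j < n \<Longrightarrow> ssl f j \<cdot> ssl v j = cid C (sing B (face i j))"
    "\<And>k. k \<le> Suc n \<Longrightarrow> rsl f k \<cdot> rsl v (cf i k) = rsl (th Q q1 q2) k"
    "\<And>k. k \<le> n \<Longrightarrow> hom C (rsl v k) (reg (tz Q q1 q2) k) (reg A k)"
    "\<And>j. j < n \<Longrightarrow> hom C (ssl v j) (sing B (face i j)) (sing A j)"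
    "\<And>j. j < n \<Longrightarrow> ssl v j \<cdot> fwd (tz Q q1 q2) j = fwd A j \<cdot> rsl v j"
    "\<And>j. j < n \<Longrightarrow> ssl v j \<cdot> bwd (tz Q q1 q2) j = bwd A j \<cdot> rsl v (Suc j)"
proof -
  have smv: "\<forall>j<zlen (zsrc v). smap f (smap v j) = smap (th Q q1 q2) j"
    using vs vsm fs by (auto simp: tz_simps th_simps)
  have e: "zsrc v = zsrc (th Q q1 q2)" "ztgt v = zsrc f" "ztgt (th Q q1 q2) = ztgt f"
    using vs vt by (simp_all add: th_simps)
  have CC: "(\<forall>j<zlen (zsrc v). ssl f (smap v j) \<cdot> ssl v j = ssl (th Q q1 q2) j) \<and>
     (\<forall>k\<le>Suc n. rsl f k \<cdot> rsl v (cf i k) = rsl (th Q q1 q2) k)"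
    using ve unfolding zcomp_face_eq[OF n1 n2 ile fs vz th_zmap[OF ok] e smv] .
  show "\<And>j. j < n \<Longrightarrow> ssl f j \<cdot> ssl v j = cid C (sing B (face i j))"
    using CC vs vsm by (auto simp: tz_simps th_simps)
  show "\<And>k. k \<le> Suc n \<Longrightarrow> rsl f k \<cdot> rsl v (cf i k) = rsl (th Q q1 q2) k"
    using CC by auto
  have l: "zlen (zsrc v) = n" "zlen (ztgt v) = n" using vs vt n1 tz_simps by auto
  note vc = vz[unfolded is_zmap_idm[OF l vsm]]
  show "\<And>k. k \<le> n \<Longrightarrow> hom C (rsl v k) (reg (tz Q q1 q2) k) (reg A k)"
    "\<And>j. j < n \<Longrightarrow> hom C (ssl v j) (sing B (face i j)) (sing A j)"
    "\<And>j. j < n \<Longrightarrow> ssl v j \<cdot> fwd (tz Q q1 q2) j = fwd A j \<cdot> rsl v j"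
    "\<And>j. j < n \<Longrightarrow> ssl v j \<cdot> bwd (tz Q q1 q2) j = bwd A j \<cdot> rsl v (Suc j)"
    using vc vs vt by (auto simp: tz_simps(3))
qed

definition idA :: "('a,'b) zmap" where
  "idA = \<lparr>zsrc = A, ztgt = A, smap = (\<lambda>j. if j < n then j else 0),
     rsl = (\<lambda>k. if k \<le> n then cid C (reg A k) else undefined),
     ssl = (\<lambda>j. if j < n then cid C (sing A j) else undefined)\<rparr>"

lemma idA_zmap: "is_zmap C idA"
proof -
  have l: "zlen (zsrc idA) = n" "zlen (ztgt idA) = n" "\<forall>j<n. smap idA j = j"
    using n1 unfolding idA_def by auto
  have sq: "\<forall>j<n. cid C (sing A j) \<cdot> fwd A j = fwd A j \<cdot> cid C (reg A j) \<and>
     cid C (sing A j) \<cdot> bwd A j = bwd A j \<cdot> cid C (reg A (Suc j))"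
    using comp_id_l[OF fwdA] comp_id_r[OF fwdA] comp_id_l[OF bwdA] comp_id_r[OF bwdA] by auto
  show ?thesis unfolding is_zmap_idm[OF l]
    using zA id_hom[OF regA] id_hom[OF singA] sq unfolding idA_def by auto
qed

lemma idA_comp: "zcomp C f idA = f"
proof -
  have smv: "\<forall>j<zlen (zsrc idA). smap f (smap idA j) = smap f j" using n1 unfolding idA_def by auto
  have e: "zsrc idA = zsrc f" "ztgt idA = zsrc f" "ztgt f = ztgt f" unfolding idA_def by auto
  have c: "cf i k \<le> n" if "k \<le> Suc n" for k using that ile unfolding cf_def by auto
  show ?thesis
    unfolding zcomp_face_eq[OF n1 n2 ile fs idA_zmap fz e smv]
    using comp_id_r[OF fS] comp_id_r[OF fR] c n1 unfolding idA_def by auto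
qed

lemma self_unique:
  assumes cart: "pi_cartesian C f" and w: "is_zmap C w" "zsrc w = A" "ztgt w = A" "\<forall>j<n. smap w j = j"
    "zcomp C f w = f"
  shows "w = idA"
proof -
  have pre: "is_zmap C f \<and> ztgt f = ztgt f \<and> monotone_map (zlen (zsrc f)) (zlen (zsrc f)) (\<lambda>j. j) \<and>
        (\<forall>j<zlen (zsrc f). smap f j = smap f j)"
    using fz unfolding monotone_map_def by auto
  note U = cart[unfolded pi_cartesian_def, rule_format, OF pre]
  have P1: "is_zmap C idA \<and> zsrc idA = zsrc f \<and> ztgt idA = zsrc f \<and>
             (\<forall>j<zlen (zsrc f). smap idA j = j) \<and> zcomp C f idA = f"
    using idA_zmap idA_comp n1 by (auto simp: idA_def)
  have P2: "is_zmap C w \<and> zsrc w = zsrc f \<and> ztgt w = zsrc f \<and>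
             (\<forall>j<zlen (zsrc f). smap w j = j) \<and> zcomp C f w = f"
    using w n1 by auto
  show ?thesis using U P1 P2 by blast
qed

end



lemma cf_eq_i: "cf i k = i \<longleftrightarrow> k = i \<or> k = Suc i"
  unfolding cf_def by auto

context fsetup
begin

lemma th_sq:
  assumes ok: "tzok Q q1 q2" and j: "j < n"
  shows "fwd (tz Q q1 q2) j = fwd B (face i j) \<cdot> rsl (th Q q1 q2) (face i j)"
    "bwd (tz Q q1 q2) j = bwd B (face i j) \<cdot> rsl (th Q q1 q2) (Suc (face i j))"
proof -
  have l: "zlen (zsrc (th Q q1 q2)) = n" "zlen (ztgt (th Q q1 q2)) = Suc n" "\<forall>j<n. smap (th Q q1 q2) j = face i j"
    using n2 by (simp_all add: th_simps tz_simps)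
  note c = th_zmap[OF ok, unfolded is_zmap_face[OF l(1) l(2) ile l(3)]]
  have e1: "ssl (th Q q1 q2) j \<cdot> fwd (tz Q q1 q2) j = fwd (tz Q q1 q2) j"
    using comp_id_l[OF tz_fwd[OF j ok]] j unfolding th_simps tz_simps by simp
  have e2: "ssl (th Q q1 q2) j \<cdot> bwd (tz Q q1 q2) j = bwd (tz Q q1 q2) j"
    using comp_id_l[OF tz_bwd[OF j ok]] j unfolding th_simps tz_simps by simp
  show "fwd (tz Q q1 q2) j = fwd B (face i j) \<cdot> rsl (th Q q1 q2) (face i j)"
    "bwd (tz Q q1 q2) j = bwd B (face i j) \<cdot> rsl (th Q q1 q2) (Suc (face i j))"
    using c e1 e2 j unfolding th_simps(1,2) by auto
qed

lemma forward:
  assumes cart: "pi_cartesian C f"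
  shows "(\<forall>j<n. iso C (ssl f j)) \<and> (\<forall>j\<le>Suc n. j \<noteq> i \<and> j \<noteq> Suc i \<longrightarrow> iso C (rsl f j)) \<and>
     is_pullback C (rsl f i) (rsl f (Suc i)) (fwd B i) (bwd B i)"
proof -
  have cfi: "cf i i = i" "cf i (Suc i) = i" unfolding cf_def by auto
  have ii: "i < Suc n" "Suc i \<le> Suc n" "i \<le> Suc n" using ile by auto
  have fRi: "hom C (rsl f i) (reg A i) (reg B i)" using fR[OF ii(3)] cfi by simp
  have fRi1: "hom C (rsl f (Suc i)) (reg A i) (reg B (Suc i))" using fR[OF ii(2)] cfi by simp
  define Q0 where "Q0 = reg A i"
  define q01 where "q01 = rsl f i"
  define q02 where "q02 = rsl f (Suc i)"
  have ok0: "tzok Q0 q01 q02"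
    unfolding tzok_def Q0_def q01_def q02_def using regA[OF ile] fRi fRi1 fsqi by auto
  let ?X = "tz Q0 q01 q02" and ?h = "th Q0 q01 q02"
  obtain v0 where v0: "is_zmap C v0" "zsrc v0 = ?X" "ztgt v0 = A" "\<forall>j<n. smap v0 j = j" "zcomp C f v0 = ?h"
    using lift[OF cart ok0] by blast
  note P = lift_props[OF ok0 v0]
  define G where "G = (\<lambda>k. if k < i then rsl f k else if k = i then cid C (reg A i) else rsl f (Suc k))"
  have regX: "\<And>k. reg ?X k = (if k < i then reg B k else if k = i then reg A i else reg B (Suc k))"
    unfolding tz_simps Q0_def by simp
  have Ghom: "\<And>k. k \<le> n \<Longrightarrow> hom C (G k) (reg A k) (reg ?X k)"
  proof -
    fix k assume k: "k \<le> n"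
    consider "k < i" | "k = i" | "i < k" by linarith
    then show "hom C (G k) (reg A k) (reg ?X k)"
    proof cases
      case 1 then show ?thesis using fR[of k] k unfolding G_def regX cf_def by auto
    next
      case 2 then show ?thesis using id_hom[OF regA[OF ile]] unfolding G_def regX by auto
    next
      case 3 then show ?thesis using fR[of "Suc k"] k unfolding G_def regX cf_def by auto
    qed
  qed
  have GF: "\<And>j. j < n \<Longrightarrow> fwd B (face i j) \<cdot> rsl f (face i j) = fwd ?X j \<cdot> G j"
  proof -
    fix j assume j: "j < n"
    consider "j < i" | "j = i" | "i < j" by linarith
    then show "fwd B (face i j) \<cdot> rsl f (face i j) = fwd ?X j \<cdot> G j"
    proof cases
      case 1 then show ?thesis unfolding G_def tz_def face_def by auto
    next
      case 2
      have bj: "hom C (fwd B (Suc i)) (reg B (Suc i)) (sing B (Suc i))" using fwdB[of "Suc i"] j 2 by simp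
      have "hom C (fwd B (Suc i) \<cdot> rsl f (Suc i)) (reg A i) (sing B (Suc i))"
        using hom_comp[OF fRi1 bj] .
      then show ?thesis using 2 comp_id_r unfolding G_def tz_def face_def q02_def by auto
    next
      case 3 then show ?thesis unfolding G_def tz_def face_def by auto
    qed
  qed
  have GB: "\<And>j. j < n \<Longrightarrow> bwd B (face i j) \<cdot> rsl f (Suc (face i j)) = bwd ?X j \<cdot> G (Suc j)"
  proof -
    fix j assume j: "j < n"
    consider "Suc j < i" | "Suc j = i" | "i < Suc j" by linarith
    then show "bwd B (face i j) \<cdot> rsl f (Suc (face i j)) = bwd ?X j \<cdot> G (Suc j)"
    proof cases
      case 1 then show ?thesis unfolding G_def tz_def face_def by auto
    next
      case 2
      have bj: "hom C (bwd B j) (reg B i) (sing B j)" using bwdB[of j] j 2 by simp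
      have "hom C (bwd B j \<cdot> rsl f i) (reg A i) (sing B j)"
        using hom_comp[OF fRi bj] .
      then show ?thesis using 2 comp_id_r unfolding G_def tz_def face_def q01_def by auto
    next
      case 3 then show ?thesis unfolding G_def tz_def face_def by auto
    qed
  qed
  define w where "w = \<lparr>zsrc = A, ztgt = A, smap = (\<lambda>j. if j < n then j else 0),
     rsl = (\<lambda>k. if k \<le> n then rsl v0 k \<cdot> G k else undefined),
     ssl = (\<lambda>j. if j < n then ssl v0 j \<cdot> ssl f j else undefined)\<rparr>"
  have singX: "\<And>j. sing ?X j = sing B (face i j)" by (simp add: tz_simps)
  have wsq1: "\<And>j. j < n \<Longrightarrow> (ssl v0 j \<cdot> ssl f j) \<cdot> fwd A j = fwd A j \<cdot> (rsl v0 j \<cdot> G j)"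
  proof -
    fix j assume j: "j < n"
    have fx: "hom C (fwd ?X j) (reg ?X j) (sing B (face i j))" using tz_fwd[OF j ok0] singX by simp
    have "(ssl v0 j \<cdot> ssl f j) \<cdot> fwd A j = ssl v0 j \<cdot> (ssl f j \<cdot> fwd A j)"
      using comp_assoc[OF fwdA[OF j] fS[OF j] P(4)[OF j]] .
    also have "\<dots> = ssl v0 j \<cdot> (fwd ?X j \<cdot> G j)" using fsq1[OF j] GF[OF j] by simp
    also have "\<dots> = (ssl v0 j \<cdot> fwd ?X j) \<cdot> G j"
      using comp_assoc[OF Ghom fx P(4)[OF j]] j by simp
    also have "\<dots> = (fwd A j \<cdot> rsl v0 j) \<cdot> G j" using P(5)[OF j] by simp
    also have "\<dots> = fwd A j \<cdot> (rsl v0 j \<cdot> G j)"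
      using comp_assoc[OF Ghom P(3) fwdA[OF j]] j by simp
    finally show "(ssl v0 j \<cdot> ssl f j) \<cdot> fwd A j = fwd A j \<cdot> (rsl v0 j \<cdot> G j)" .
  qed
  have wsq2: "\<And>j. j < n \<Longrightarrow> (ssl v0 j \<cdot> ssl f j) \<cdot> bwd A j = bwd A j \<cdot> (rsl v0 (Suc j) \<cdot> G (Suc j))"
  proof -
    fix j assume j: "j < n"
    have sj: "Suc j \<le> n" using j by simp
    have bx: "hom C (bwd ?X j) (reg ?X (Suc j)) (sing B (face i j))" using tz_bwd[OF j ok0] singX by simp
    have "(ssl v0 j \<cdot> ssl f j) \<cdot> bwd A j = ssl v0 j \<cdot> (ssl f j \<cdot> bwd A j)"
      using comp_assoc[OF bwdA[OF j] fS[OF j] P(4)[OF j]] .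
    also have "\<dots> = ssl v0 j \<cdot> (bwd ?X j \<cdot> G (Suc j))" using fsq2[OF j] GB[OF j] by simp
    also have "\<dots> = (ssl v0 j \<cdot> bwd ?X j) \<cdot> G (Suc j)"
      using comp_assoc[OF Ghom[OF sj] bx P(4)[OF j]] by simp
    also have "\<dots> = (bwd A j \<cdot> rsl v0 (Suc j)) \<cdot> G (Suc j)" using P(6)[OF j] by simp
    also have "\<dots> = bwd A j \<cdot> (rsl v0 (Suc j) \<cdot> G (Suc j))"
      using comp_assoc[OF Ghom[OF sj] P(3)[OF sj] bwdA[OF j]] by simp
    finally show "(ssl v0 j \<cdot> ssl f j) \<cdot> bwd A j = bwd A j \<cdot> (rsl v0 (Suc j) \<cdot> G (Suc j))" .
  qed
  have wz: "is_zmap C w"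
  proof -
    have l: "zlen (zsrc w) = n" "zlen (ztgt w) = n" "\<forall>j<n. smap w j = j" using n1 unfolding w_def by auto
    have hr: "\<forall>k\<le>n. hom C (rsl v0 k \<cdot> G k) (reg A k) (reg A k)"
      using hom_comp[OF Ghom P(3)] by auto
    have hs: "\<forall>j<n. hom C (ssl v0 j \<cdot> ssl f j) (sing A j) (sing A j)"
      using hom_comp[OF fS P(4)] by auto
    show ?thesis unfolding is_zmap_idm[OF l]
      using zA hr hs wsq1 wsq2 unfolding w_def by auto
  qed
  have wc: "zcomp C f w = f"
  proof -
    have smv: "\<forall>j<zlen (zsrc w). smap f (smap w j) = smap f j" using n1 unfolding w_def by auto
    have e: "zsrc w = zsrc f" "ztgt w = zsrc f" "ztgt f = ztgt f" unfolding w_def by auto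
    have S: "\<And>j. j < n \<Longrightarrow> ssl f j \<cdot> (ssl v0 j \<cdot> ssl f j) = ssl f j"
    proof -
      fix j assume j: "j < n"
      have "ssl f j \<cdot> (ssl v0 j \<cdot> ssl f j) = (ssl f j \<cdot> ssl v0 j) \<cdot> ssl f j"
        using comp_assoc[OF fS[OF j] P(4)[OF j] fS[OF j]] by simp
      then show "ssl f j \<cdot> (ssl v0 j \<cdot> ssl f j) = ssl f j" using P(1)[OF j] comp_id_l[OF fS[OF j]] by simp
    qed
    have R: "\<And>k. k \<le> Suc n \<Longrightarrow> rsl f k \<cdot> (rsl v0 (cf i k) \<cdot> G (cf i k)) = rsl f k"
    proof -
      fix k assume k: "k \<le> Suc n"
      have ck: "cf i k \<le> n" using cf_le[OF k ile] .
      have "rsl f k \<cdot> (rsl v0 (cf i k) \<cdot> G (cf i k)) = (rsl f k \<cdot> rsl v0 (cf i k)) \<cdot> G (cf i k)"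
        using comp_assoc[OF Ghom[OF ck] P(3)[OF ck] fR[OF k]] by simp
      also have "\<dots> = rsl ?h k \<cdot> G (cf i k)" using P(2)[OF k] by simp
      also have "\<dots> = rsl f k"
      proof -
        consider "k < i" | "k = i" | "k = Suc i" | "Suc i < k" by linarith
        then show ?thesis
        proof cases
          case 1 then show ?thesis using comp_id_l[OF fR[OF k]] k unfolding th_simps G_def cf_def by auto
        next
          case 2 then show ?thesis using comp_id_r[OF fRi] unfolding th_simps G_def cf_def q01_def by auto
        next
          case 3 then show ?thesis using comp_id_r[OF fRi1] unfolding th_simps G_def cf_def q02_def by auto
        next
          case 4
          have "hom C (rsl f k) (reg A (k - 1)) (reg B k)" using fR[OF k] 4 unfolding cf_def by auto
          then show ?thesis using comp_id_l 4 k unfolding th_simps G_def cf_def by auto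
        qed
      qed
      finally show "rsl f k \<cdot> (rsl v0 (cf i k) \<cdot> G (cf i k)) = rsl f k" .
    qed
    have ck: "\<And>k. k \<le> Suc n \<Longrightarrow> cf i k \<le> n" using cf_le ile by auto
    show ?thesis
      unfolding zcomp_face_eq[OF n1 n2 ile fs wz fz e smv]
      using S R ck n1 unfolding w_def by auto
  qed
  have wid: "w = idA"
    by (rule self_unique[OF cart wz]) (use wc in \<open>auto simp: w_def\<close>)
  have WS: "\<And>j. j < n \<Longrightarrow> ssl v0 j \<cdot> ssl f j = cid C (sing A j)"
  proof -
    fix j assume j: "j < n"
    have "ssl w j = ssl idA j" using wid by simp
    then show "ssl v0 j \<cdot> ssl f j = cid C (sing A j)" using j unfolding w_def idA_def by simp
  qed
  have WR: "\<And>k. k \<le> n \<Longrightarrow> rsl v0 k \<cdot> G k = cid C (reg A k)"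
  proof -
    fix k assume k: "k \<le> n"
    have "rsl w k = rsl idA k" using wid by simp
    then show "rsl v0 k \<cdot> G k = cid C (reg A k)" using k unfolding w_def idA_def by simp
  qed
  have isoS: "\<forall>j<n. iso C (ssl f j)"
  proof (intro allI impI)
    fix j assume j: "j < n"
    show "iso C (ssl f j)" by (rule isoI[OF fS[OF j] P(4)[OF j] WS[OF j] P(1)[OF j]])
  qed
  have isoR: "\<forall>k\<le>Suc n. k \<noteq> i \<and> k \<noteq> Suc i \<longrightarrow> iso C (rsl f k)"
  proof (intro allI impI)
    fix k assume k: "k \<le> Suc n" and ne: "k \<noteq> i \<and> k \<noteq> Suc i"
    show "iso C (rsl f k)"
    proof (cases "k < i")
      case True
      have c: "cf i k = k" using True unfolding cf_def by auto
      have kn: "k \<le> n" using True ile by auto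
      have a: "hom C (rsl f k) (reg A k) (reg B k)" using fR[OF k] c by simp
      have b: "hom C (rsl v0 k) (reg B k) (reg A k)" using P(3)[OF kn] True unfolding regX by simp
      have e1: "rsl v0 k \<cdot> rsl f k = cid C (reg A k)" using WR[OF kn] True unfolding G_def by simp
      have e2: "rsl f k \<cdot> rsl v0 k = cid C (reg B k)" using P(2)[OF k] c True k unfolding th_simps by auto
      show ?thesis by (rule isoI[OF a b e1 e2])
    next
      case False
      then have gt: "Suc i < k" using ne by auto
      have c: "cf i k = k - 1" using gt unfolding cf_def by auto
      have kn: "k - 1 \<le> n" using k by auto
      have a: "hom C (rsl f k) (reg A (k - 1)) (reg B k)" using fR[OF k] c by simp
      have rx: "reg ?X (k - 1) = reg B k" unfolding regX using gt by auto
      have b: "hom C (rsl v0 (k - 1)) (reg B k) (reg A (k - 1))" using P(3)[OF kn] unfolding rx .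
      have gx: "G (k - 1) = rsl f k" unfolding G_def using gt by auto
      have e1: "rsl v0 (k - 1) \<cdot> rsl f k = cid C (reg A (k - 1))" using WR[OF kn] unfolding gx .
      have e2: "rsl f k \<cdot> rsl v0 (k - 1) = cid C (reg B k)" using P(2)[OF k] c gt k unfolding th_simps by auto
      show ?thesis by (rule isoI[OF a b e1 e2])
    qed
  qed
  have pbk: "is_pullback C (rsl f i) (rsl f (Suc i)) (fwd B i) (bwd B i)"
  proof -
    have basics: "rsl f i \<in> Ar C" "rsl f (Suc i) \<in> Ar C" "fwd B i \<in> Ar C" "bwd B i \<in> Ar C"
      "cdom C (rsl f i) = cdom C (rsl f (Suc i))" "ccod C (rsl f i) = cdom C (fwd B i)"
      "ccod C (rsl f (Suc i)) = cdom C (bwd B i)" "ccod C (fwd B i) = ccod C (bwd B i)"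
      using fRi fRi1 fwdB[OF ii(1)] bwdB[OF ii(1)] unfolding hom_def by auto
    have univ: "\<exists>!u. hom C u (cdom C q1) (cdom C (rsl f i)) \<and> rsl f i \<cdot> u = q1 \<and> rsl f (Suc i) \<cdot> u = q2"
      if q: "q1 \<in> Ar C \<and> q2 \<in> Ar C \<and> cdom C q1 = cdom C q2 \<and> ccod C q1 = cdom C (fwd B i) \<and>
        ccod C q2 = cdom C (bwd B i) \<and> fwd B i \<cdot> q1 = bwd B i \<cdot> q2" for q1 q2
    proof -
      define Q where "Q = cdom C q1"
      have hq1: "hom C q1 Q (reg B i)" using q fwdB[OF ii(1)] unfolding hom_def Q_def by auto
      have hq2: "hom C q2 Q (reg B (Suc i))" using q bwdB[OF ii(1)] unfolding hom_def Q_def by auto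
      have ok: "tzok Q q1 q2" using hq1 hq2 hom_obs[OF hq1] q unfolding tzok_def by auto
      let ?Y = "tz Q q1 q2" and ?k = "th Q q1 q2"
      have cdi: "cdom C (rsl f i) = reg A i" using fRi unfolding hom_def by simp
      obtain v where v: "is_zmap C v" "zsrc v = ?Y" "ztgt v = A" "\<forall>j<n. smap v j = j" "zcomp C f v = ?k"
        using lift[OF cart ok] by blast
      note U = lift[OF cart ok]
      note PV = lift_props[OF ok v]
      have regY: "\<And>k. reg ?Y k = (if k < i then reg B k else if k = i then Q else reg B (Suc k))"
        unfolding tz_simps by simp
      have vi: "hom C (rsl v i) Q (reg A i)" using PV(3)[OF ile] unfolding regY by simp
      have vi1: "rsl f i \<cdot> rsl v i = q1" using PV(2)[OF ii(3)] cfi unfolding th_simps by simp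
      have vi2: "rsl f (Suc i) \<cdot> rsl v i = q2" using PV(2)[OF ii(2)] cfi unfolding th_simps by simp
      show ?thesis
      proof (rule ex1I[of _ "rsl v i"])
        show "hom C (rsl v i) (cdom C q1) (cdom C (rsl f i)) \<and> rsl f i \<cdot> rsl v i = q1 \<and> rsl f (Suc i) \<cdot> rsl v i = q2"
          using vi vi1 vi2 cdi Q_def by simp
      next
        fix u' assume u': "hom C u' (cdom C q1) (cdom C (rsl f i)) \<and> rsl f i \<cdot> u' = q1 \<and> rsl f (Suc i) \<cdot> u' = q2"
        have hu: "hom C u' Q (reg A i)" using u' cdi Q_def by simp
        define v' where "v' = v\<lparr>rsl := (rsl v)(i := u')\<rparr>"
        have v'r: "\<And>k. rsl v' k = (if k = i then u' else rsl v k)" unfolding v'_def by simp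
        have v'o: "zsrc v' = ?Y" "ztgt v' = A" "smap v' = smap v" "ssl v' = ssl v"
          using v unfolding v'_def by simp_all
        have V2: "\<And>k. k \<le> Suc n \<Longrightarrow> rsl f k \<cdot> rsl v' (cf i k) = rsl ?k k"
        proof -
          fix k assume k: "k \<le> Suc n"
          show "rsl f k \<cdot> rsl v' (cf i k) = rsl ?k k"
          proof (cases "cf i k = i")
            case True
            then have "k = i \<or> k = Suc i" using cf_eq_i by simp
            then show ?thesis using True u' v'r unfolding th_simps by auto
          next
            case False then show ?thesis using PV(2)[OF k] v'r by simp
          qed
        qed
        have Rh: "\<And>k. k \<le> n \<Longrightarrow> hom C (rsl v' k) (reg ?Y k) (reg A k)"
        proof -
          fix k assume k: "k \<le> n"
          show "hom C (rsl v' k) (reg ?Y k) (reg A k)"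
          proof (cases "k = i")
            case True then show ?thesis using hu v'r regY by simp
          next
            case False then show ?thesis using PV(3)[OF k] v'r by simp
          qed
        qed
        have sqv': "\<And>j. j < n \<Longrightarrow> ssl v j \<cdot> fwd ?Y j = fwd A j \<cdot> rsl v' j \<and>
                ssl v j \<cdot> bwd ?Y j = bwd A j \<cdot> rsl v' (Suc j)"
        proof -
          fix j assume j: "j < n"
          have isj: "iso C (ssl f j)" using isoS j by simp
          have sY: "sing ?Y j = sing B (face i j)" by (simp add: tz_simps)
          have fy: "hom C (fwd ?Y j) (reg ?Y j) (sing B (face i j))" using tz_fwd[OF j ok] sY by simp
          have by': "hom C (bwd ?Y j) (reg ?Y (Suc j)) (sing B (face i j))" using tz_bwd[OF j ok] sY by simp
          have jn: "j \<le> n" "Suc j \<le> n" using j by auto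
          have dj: "face i j \<le> Suc n" "Suc (face i j) \<le> Suc n" using face_lt[OF j] by auto
          have fRd: "hom C (rsl f (face i j)) (reg A j) (reg B (face i j))" using fR[OF dj(1)] cf_face by simp
          have fRd1: "hom C (rsl f (Suc (face i j))) (reg A (Suc j)) (reg B (Suc (face i j)))"
            using fR[OF dj(2)] cf_Suc_face by simp
          have L1: "ssl f j \<cdot> (ssl v j \<cdot> fwd ?Y j) = fwd ?Y j"
            using comp_assoc[OF fy PV(4)[OF j] fS[OF j]] PV(1)[OF j] comp_id_l[OF fy] by simp
          have R1: "ssl f j \<cdot> (fwd A j \<cdot> rsl v' j) = fwd ?Y j"
          proof -
            have "ssl f j \<cdot> (fwd A j \<cdot> rsl v' j) = (ssl f j \<cdot> fwd A j) \<cdot> rsl v' j"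
              using comp_assoc[OF Rh[OF jn(1)] fwdA[OF j] fS[OF j]] by simp
            also have "\<dots> = (fwd B (face i j) \<cdot> rsl f (face i j)) \<cdot> rsl v' j" using fsq1[OF j] by simp
            also have "\<dots> = fwd B (face i j) \<cdot> (rsl f (face i j) \<cdot> rsl v' j)"
              using comp_assoc[OF Rh[OF jn(1)] fRd fwdB] face_lt[OF j] by simp
            also have "\<dots> = fwd B (face i j) \<cdot> rsl ?k (face i j)" using V2[OF dj(1)] cf_face by simp
            also have "\<dots> = fwd ?Y j" using th_sq(1)[OF ok j] by simp
            finally show ?thesis .
          qed
          have L2: "ssl f j \<cdot> (ssl v j \<cdot> bwd ?Y j) = bwd ?Y j"
            using comp_assoc[OF by' PV(4)[OF j] fS[OF j]] PV(1)[OF j] comp_id_l[OF by'] by simp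
          have R2: "ssl f j \<cdot> (bwd A j \<cdot> rsl v' (Suc j)) = bwd ?Y j"
          proof -
            have "ssl f j \<cdot> (bwd A j \<cdot> rsl v' (Suc j)) = (ssl f j \<cdot> bwd A j) \<cdot> rsl v' (Suc j)"
              using comp_assoc[OF Rh[OF jn(2)] bwdA[OF j] fS[OF j]] by simp
            also have "\<dots> = (bwd B (face i j) \<cdot> rsl f (Suc (face i j))) \<cdot> rsl v' (Suc j)" using fsq2[OF j] by simp
            also have "\<dots> = bwd B (face i j) \<cdot> (rsl f (Suc (face i j)) \<cdot> rsl v' (Suc j))"
              using comp_assoc[OF Rh[OF jn(2)] fRd1 bwdB] face_lt[OF j] by simp
            also have "\<dots> = bwd B (face i j) \<cdot> rsl ?k (Suc (face i j))" using V2[OF dj(2)] cf_Suc_face by simp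
            also have "\<dots> = bwd ?Y j" using th_sq(2)[OF ok j] by simp
            finally show ?thesis .
          qed
          have h1: "hom C (ssl v j \<cdot> fwd ?Y j) (reg ?Y j) (sing A j)" using hom_comp[OF fy PV(4)[OF j]] .
          have h2: "hom C (fwd A j \<cdot> rsl v' j) (reg ?Y j) (sing A j)" using hom_comp[OF Rh[OF jn(1)] fwdA[OF j]] .
          have h3: "hom C (ssl v j \<cdot> bwd ?Y j) (reg ?Y (Suc j)) (sing A j)" using hom_comp[OF by' PV(4)[OF j]] .
          have h4: "hom C (bwd A j \<cdot> rsl v' (Suc j)) (reg ?Y (Suc j)) (sing A j)"
            using hom_comp[OF Rh[OF jn(2)] bwdA[OF j]] .
          show "ssl v j \<cdot> fwd ?Y j = fwd A j \<cdot> rsl v' j \<and> ssl v j \<cdot> bwd ?Y j = bwd A j \<cdot> rsl v' (Suc j)"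
            using iso_cancel[OF isj fS[OF j] h1 h2] iso_cancel[OF isj fS[OF j] h3 h4] L1 R1 L2 R2 by simp
        qed
        have vc: "zigzag C ?Y \<and> zigzag C A \<and> (\<forall>j\<ge>n. smap v j = 0) \<and> (\<forall>k>n. rsl v k = undefined) \<and>
            (\<forall>j\<ge>n. ssl v j = undefined)"
        proof -
          have lv: "zlen (zsrc v) = n" "zlen (ztgt v) = n" using v(2,3) n1 by (auto simp: tz_simps)
          show ?thesis using v(1)[unfolded is_zmap_idm[OF lv v(4)]] v(2,3) by auto
        qed
        have l': "zlen (zsrc v') = n" "zlen (ztgt v') = n" "\<forall>j<n. smap v' j = j"
          using v'o v(4) n1 by (auto simp: tz_simps)
        have vz': "is_zmap C v'"
          unfolding is_zmap_idm[OF l']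
          using vc Rh PV(4) sqv' v'o v'r ile by (auto simp: tz_simps(3))
        have smv: "\<forall>j<zlen (zsrc v'). smap f (smap v' j) = smap ?k j"
          using v'o v(4) fs by (auto simp: tz_simps th_simps)
        have e: "zsrc v' = zsrc ?k" "ztgt v' = zsrc f" "ztgt ?k = ztgt f"
          using v'o by (simp_all add: th_simps)
        have S1: "\<forall>j<zlen (zsrc v'). ssl f (smap v' j) \<cdot> ssl v' j = ssl ?k j"
          using PV(1) v'o v(4) by (auto simp: tz_simps th_simps)
        have zc': "zcomp C f v' = ?k"
          unfolding zcomp_face_eq[OF n1 n2 ile fs vz' th_zmap[OF ok] e smv]
          using S1 V2 by auto
        have "v' = v"
          using U vz' zc' v'o v(1-5) l' by (metis)
        then show "u' = rsl v i" using v'r[of i] by simp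
      qed
    qed
    show ?thesis unfolding is_pullback_def using basics fsqi univ by blast
  qed
  show ?thesis using isoS isoR pbk by blast
qed

end


theorem lemma4p1:
  fixes C :: "('o,'m) category" and f :: "('o,'m) zmap" and n i :: nat
  assumes "category C"
    and "is_zmap C f"
    and "zlen (zsrc f) = n" and "zlen (ztgt f) = Suc n"
    and "i \<le> n"
    and "\<forall>j<n. smap f j = face i j"
  shows "pi_cartesian C f \<longleftrightarrow>
           ((\<forall>j<n. iso C (ssl f j)) \<and>
            (\<forall>j\<le>Suc n. j \<noteq> i \<and> j \<noteq> Suc i \<longrightarrow> iso C (rsl f j)) \<and>
            is_pullback C (rsl f i) (rsl f (Suc i)) (fwd (ztgt f) i) (bwd (ztgt f) i))"
proof -
  interpret fsetup C f n i
    using assms by (simp add: fsetup_def cat_def fsetup_axioms_def)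
  show ?thesis using forward backward[OF assms(2-6)] by blast
qed

end
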